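(* Assume the setting, utility assumptions and trading rule in the context, and assume moreover that all goods are essential for all agents, so $X_i=\mathbb{R}^{n+1}_{++}$ for every $i$. Start from initial holdings $x_i^0\in X_i$. (a) For any fixed premium levels $\delta_{ij}>0$, any sequence of bilateral trades (each executed according to the trading rule with these premiums) is finite: after finitely many trades no further bilateral trade is available. (b) Consider a process organized in stages $k=1,2,\dots$: in stage $k$ the premiums are $\delta^k_{ij}>0$, bilateral trades with these premiums are carried out (in any order) until no bilateral trade is available, after which the premiums are lowered to $\delta^{k+1}_{ij}\le\delta^k_{ij}$, with $\max_{i,j}\delta^k_{ij}\to0$ as $k\to\infty$. Then the sequences of holdings $x_i$ and price thresholds $p_{ij}(x_i)$ generated by this process converge, and their limits $\bar x_i$ form, together with prices $\bar p_j$, an equilibrium of prices and holdings (each $\bar x_i$ maximizes $u_i$ over $X_i$ subject to $x_{i0}+\sum_{j=1}^n\bar p_jx_{ij}=\bar x_{i0}+\sum_{j=1}^n\bar p_j\bar x_{ij}$), where moreover $p_{ij}(\bar x_i)=\bar p_j$ for every good $j\ne0$ and every agent $i$.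
   Context: There are goods $j=0,1,\dots,n$, good $0$ being money, and agents $i=1,\dots,m$; agent $i$ holds $x_i=(x_{i0},\dots,x_{in})$. Utility assumptions: $u_i$ is concave and twice continuously differentiable on $X_i$; $\nabla u_i(x_i)$ has all components positive; $\nabla^2u_i(x_i)$ is negative definite on the subspace orthogonal to $\nabla u_i(x_i)$; for every $x_i\in X_i$ the set $\{x_i'\in X_i:u_i(x_i')\ge u_i(x_i)\}$ is closed in $\mathbb{R}^{n+1}$. Price threshold: $p_{ij}(x_i)=\frac{\partial u_i}{\partial x_{ij}}(x_i)/\frac{\partial u_i}{\partial x_{i0}}(x_i)$ for $j\ne0$. Notation: $[\pi_j,-1]$ is the vector in $\mathbb{R}^{n+1}$ with component $0$ equal to $\pi_j$, component $j$ equal to $-1$, other components $0$. For $\pi_j>0$ define $\xi^+_j(x_i,\pi_j)=\operatorname{argmax}\{u_i(x_i+\xi[\pi_j,-1]):\xi\ge0,\ x_i+\xi[\pi_j,-1]\in X_i\}$ and $\xi^-_j(x_i,\pi_j)=\operatorname{argmax}\{u_i(x_i-\xi[\pi_j,-1]):\xi\ge0,\ x_i-\xi[\pi_j,-1]\in X_i\}$. Each agent $i$ has for each good $j\ne0$ a premium $\delta_{ij}>0$, and sets selling and buying prices $p^+_{ij}(x_i)=p_{ij}(x_i)+\delta_{ij}$, $p^-_{ij}(x_i)=p_{ij}(x_i)-\delta_{ij}$. Bilateral trade: a trade in good $j\ne0$ between seller $i_1$ and buyer $i_2$ at price $\pi_j$ is available if $x_{i_1j}>0$, $p^+_{i_1j}(x_{i_1})\le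 p^-_{i_2j}(x_{i_2})$ and $\pi_j\in[p^+_{i_1j}(x_{i_1}),p^-_{i_2j}(x_{i_2})]$; executing it transfers the amount $\xi_j=\min\{\xi^+_j(x_{i_1},\pi_j),\xi^-_j(x_{i_2},\pi_j)\}$ of good $j$ from $i_1$ to $i_2$ and the money amount $\pi_j\xi_j$ from $i_2$ to $i_1$, i.e. $x'_{i_1}=x_{i_1}+\xi_j[\pi_j,-1]$, $x'_{i_2}=x_{i_2}-\xi_j[\pi_j,-1]$, other agents' holdings unchanged. *)

theory Defs
  imports "HOL-Analysis.Analysis"
begin

text \<open>Goods are the elements of a finite type 'g (so there are CARD('g) = n+1 goods);
  the distinguished good g0 is money.
  Agents are the natural numbers 1..m; a state assigns a holding to each agent.\<close>

definition pos_orthant :: "(real ^ 'g::finite) set" where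
  "pos_orthant = {x. \<forall>j. 0 < x $ j}"

definition utility_assms ::
  "(real ^ 'g::finite) set \<Rightarrow> (real ^ 'g \<Rightarrow> real) \<Rightarrow> (real ^ 'g \<Rightarrow> real ^ 'g)
     \<Rightarrow> (real ^ 'g \<Rightarrow> real ^ 'g ^ 'g) \<Rightarrow> bool" where
  "utility_assms X u Du H \<longleftrightarrow>
     concave_on X u \<and>
     (\<forall>x\<in>X. (u has_derivative (\<lambda>h. Du x \<bullet> h)) (at x)) \<and>
     (\<forall>x\<in>X. (Du has_derivative (\<lambda>h. H x *v h)) (at x)) \<and>
     continuous_on X H \<and>
     (\<forall>x\<in>X. \<forall>j. 0 < Du x $ j) \<and>
     (\<forall>x\<in>X. \<forall>h. h \<noteq> 0 \<and> Du x \<bullet> h = 0 \<longrightarrow> h \<bullet> (H x *v h) < 0) \<and>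
     (\<forall>x\<in>X. closed {x'\<in>X. u x \<le> u x'})"

definition thr :: "'g \<Rightarrow> (real ^ 'g \<Rightarrow> real ^ 'g) \<Rightarrow> real ^ 'g \<Rightarrow> 'g \<Rightarrow> real" where
  "thr g0 Du x j = Du x $ j / Du x $ g0"

definition dirv :: "'g \<Rightarrow> 'g \<Rightarrow> real \<Rightarrow> real ^ 'g::finite" where
  "dirv g0 j \<pi> = (\<chi> k. if k = g0 then \<pi> else if k = j then -1 else 0)"

definition xi_plus ::
  "(real ^ 'g::finite) set \<Rightarrow> (real ^ 'g \<Rightarrow> real) \<Rightarrow> 'g \<Rightarrow> 'g \<Rightarrow> real ^ 'g \<Rightarrow> real \<Rightarrow> real" where
  "xi_plus X u g0 j x \<pi> =
     arg_max (\<lambda>\<xi>. u (x + \<xi> *\<^sub>R dirv g0 j \<pi>)) (\<lambda>\<xi>. 0 \<le> \<xi> \<and> x + \<xi> *\<^sub>R dirv g0 j \<pi> \<in> X)"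

definition xi_minus ::
  "(real ^ 'g::finite) set \<Rightarrow> (real ^ 'g \<Rightarrow> real) \<Rightarrow> 'g \<Rightarrow> 'g \<Rightarrow> real ^ 'g \<Rightarrow> real \<Rightarrow> real" where
  "xi_minus X u g0 j x \<pi> =
     arg_max (\<lambda>\<xi>. u (x - \<xi> *\<^sub>R dirv g0 j \<pi>)) (\<lambda>\<xi>. 0 \<le> \<xi> \<and> x - \<xi> *\<^sub>R dirv g0 j \<pi> \<in> X)"

text \<open>One bilateral trade with premiums delta (indexed by agent and good):
  seller i1, buyer i2, good j, price \<pi>.\<close>
definition trade_step ::
  "(real ^ 'g::finite) set \<Rightarrow> (nat \<Rightarrow> real ^ 'g \<Rightarrow> real) \<Rightarrow> (nat \<Rightarrow> real ^ 'g \<Rightarrow> real ^ 'g)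
     \<Rightarrow> 'g \<Rightarrow> nat \<Rightarrow> (nat \<Rightarrow> 'g \<Rightarrow> real)
     \<Rightarrow> (nat \<Rightarrow> real ^ 'g) \<Rightarrow> (nat \<Rightarrow> real ^ 'g) \<Rightarrow> bool" where
  "trade_step X u Du g0 m \<delta> s s' \<longleftrightarrow>
     (\<exists>i1 i2 j \<pi>. i1 \<in> {1..m} \<and> i2 \<in> {1..m} \<and> j \<noteq> g0 \<and>
        0 < s i1 $ j \<and>
        thr g0 (Du i1) (s i1) j + \<delta> i1 j \<le> thr g0 (Du i2) (s i2) j - \<delta> i2 j \<and>
        thr g0 (Du i1) (s i1) j + \<delta> i1 j \<le> \<pi> \<and> \<pi> \<le> thr g0 (Du i2) (s i2) j - \<delta> i2 j \<and>
        (let \<xi> = min (xi_plus X (u i1) g0 j (s i1) \<pi>) (xi_minus X (u i2) g0 j (s i2) \<pi>)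
         in s' = s(i1 := s i1 + \<xi> *\<^sub>R dirv g0 j \<pi>, i2 := s i2 - \<xi> *\<^sub>R dirv g0 j \<pi>)))"

definition trade_available ::
  "(real ^ 'g::finite) set \<Rightarrow> (nat \<Rightarrow> real ^ 'g \<Rightarrow> real) \<Rightarrow> (nat \<Rightarrow> real ^ 'g \<Rightarrow> real ^ 'g)
     \<Rightarrow> 'g \<Rightarrow> nat \<Rightarrow> (nat \<Rightarrow> 'g \<Rightarrow> real) \<Rightarrow> (nat \<Rightarrow> real ^ 'g) \<Rightarrow> bool" where
  "trade_available X u Du g0 m \<delta> s \<longleftrightarrow> (\<exists>s'. trade_step X u Du g0 m \<delta> s s')"

definition equilibrium ::
  "(real ^ 'g::finite) set \<Rightarrow> (nat \<Rightarrow> real ^ 'g \<Rightarrow> real) \<Rightarrow> 'g \<Rightarrow> nat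
     \<Rightarrow> (nat \<Rightarrow> real ^ 'g) \<Rightarrow> (nat \<Rightarrow> real ^ 'g) \<Rightarrow> ('g \<Rightarrow> real) \<Rightarrow> bool" where
  "equilibrium X u g0 m x0 xbar pbar \<longleftrightarrow>
     (\<forall>i\<in>{1..m}. xbar i \<in> X \<and>
        (\<forall>x\<in>X. x $ g0 + (\<Sum>j\<in>UNIV - {g0}. pbar j * x $ j)
                 = xbar i $ g0 + (\<Sum>j\<in>UNIV - {g0}. pbar j * xbar i $ j)
               \<longrightarrow> u i x \<le> u i (xbar i))) \<and>
     (\<Sum>i=1..m. xbar i) = (\<Sum>i=1..m. x0 i)"

end

theory Submission
  imports Defs
begin

lemma concave_grad:
  fixes f :: "real^'g::finite \<Rightarrow> real"
  assumes cc: "concave_on S f" and op: "open S" and x: "x \<in> S" and y: "y \<in> S"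
    and d: "(f has_derivative (\<lambda>h. D \<bullet> h)) (at x)"
  shows "f y \<le> f x + D \<bullet> (y - x)"
proof -
  define A where "A = {t::real. x + t *\<^sub>R (y - x) \<in> S}"
  define g where "g t = - f (x + t *\<^sub>R (y - x))" for t
  have cS: "convex S" using cc by (simp add: concave_on_iff)
  have eq: "p *\<^sub>R (x + a *\<^sub>R (y - x)) + q *\<^sub>R (x + b *\<^sub>R (y - x)) = x + (p * a + q * b) *\<^sub>R (y - x)"
    if "p + q = 1" for p q a b :: real
    using that by (simp add: algebra_simps) (metis add.commute add_diff_cancel_left' scaleR_add_left scaleR_one)
  have cA: "convex A" unfolding A_def convex_def
  proof (intro allI impI ballI, simp)
    fix a b p q :: real assume "x + a *\<^sub>R (y - x) \<in> S" "x + b *\<^sub>R (y - x) \<in> S" "0 \<le> p" "0 \<le> q" "p + q = 1"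
    then show "x + (p * a + q * b) *\<^sub>R (y - x) \<in> S" using cS eq[of p q a b] unfolding convex_def by metis
  qed
  have "A = (\<lambda>t. x + t *\<^sub>R (y - x)) -` S" by (auto simp: A_def)
  then have oA: "open A"
    using continuous_open_vimage[OF op, of "\<lambda>t. x + t *\<^sub>R (y - x)"] by (auto intro: continuous_intros)
  have 0: "0 \<in> A" "1 \<in> A" using x y by (auto simp: A_def)
  have cg: "convex_on A g"
    unfolding convex_on_def g_def
  proof (intro conjI cA ballI allI impI)
    fix a b :: real and p q :: real
    assume a: "a \<in> A" and b: "b \<in> A" and p: "p \<ge> 0" "q \<ge> 0" "p + q = 1"
    have "f (p *\<^sub>R (x + a *\<^sub>R (y - x)) + q *\<^sub>R (x + b *\<^sub>R (y - x))) \<ge> p * f (x + a *\<^sub>R (y - x)) + q * f (x + b *\<^sub>R (y - x))"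
      by (rule conjunct2[OF cc[unfolded concave_on_iff], rule_format]) (use a b p in \<open>auto simp: A_def\<close>)
    moreover have "p *\<^sub>R (x + a *\<^sub>R (y - x)) + q *\<^sub>R (x + b *\<^sub>R (y - x)) = x + (p * a + q * b) *\<^sub>R (y - x)"
      using eq p(3) by blast
    ultimately show "- f (x + (p *\<^sub>R a + q *\<^sub>R b) *\<^sub>R (y - x)) \<le> p * - f (x + a *\<^sub>R (y - x)) + q * - f (x + b *\<^sub>R (y - x))"
      by simp
  qed
  have dg: "(g has_field_derivative - (D \<bullet> (y - x))) (at 0 within A)"
  proof -
    have "((\<lambda>t. x + t *\<^sub>R (y - x)) has_derivative (\<lambda>t. t *\<^sub>R (y - x))) (at 0)"
      by (auto intro!: derivative_eq_intros)
    from has_derivative_compose[OF this, of f "\<lambda>h. D \<bullet> h"] d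
    have h1: "((\<lambda>t. f (x + t *\<^sub>R (y - x))) has_derivative (\<lambda>t. D \<bullet> (t *\<^sub>R (y - x)))) (at 0)" by (simp add: o_def)
    have "((\<lambda>t. f (x + t *\<^sub>R (y - x))) has_field_derivative (D \<bullet> (y - x))) (at 0)"
      proof -
      have "(\<lambda>t. t * (D \<bullet> (y - x))) = (*) (D \<bullet> (y - x))" by (rule ext) (simp add: mult.commute)
      with h1 show ?thesis
        unfolding has_field_derivative_def by simp
    qed
    then have "((\<lambda>t. - f (x + t *\<^sub>R (y - x))) has_field_derivative - (D \<bullet> (y - x))) (at 0)"
      by (rule DERIV_minus)
    then show ?thesis unfolding g_def[abs_def] by (rule has_field_derivative_at_within)
  qed
  have "g 1 - g 0 \<ge> - (D \<bullet> (y - x)) * (1 - 0)"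
    by (rule convex_on_imp_above_tangent[OF cg convex_connected[OF cA]]) (simp_all add: interior_open[OF oA] 0 dg)
  then show ?thesis by (simp add: g_def)
qed

lemma open_pos: "open (pos_orthant :: (real^'g::finite) set)"
proof -
  have "pos_orthant = (\<Inter>j. {x::real^'g. 0 < x $ j})" by (auto simp: pos_orthant_def)
  moreover have "open (\<Inter>j. {x::real^'g. 0 < x $ j})"
    by (intro open_INT) (auto intro: open_halfspace_component_gt_cart)
  ultimately show ?thesis by simp
qed

lemma convex_pos: "convex (pos_orthant :: (real^'g::finite) set)"
proof -
  have "0 < u * x $ j + v * y $ j" if "\<forall>j. 0 < x $ j" "\<forall>j. 0 < y $ j" "0 \<le> u" "0 \<le> v" "u + v = 1"
    for x y :: "real^'g" and u v :: real and j
  proof -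
    have "0 < x $ j" "0 < y $ j" using that by auto
    then show ?thesis using that(3-5)
      by (cases "u = 0") (auto intro: add_pos_nonneg)
  qed
  then show ?thesis unfolding convex_def pos_orthant_def by auto
qed

lemma ua_cont:
  assumes "utility_assms X u Du H"
  shows "continuous_on X u" "continuous_on X Du"
proof -
  have "continuous (at x) u" "continuous (at x) Du" if "x \<in> X" for x
    using assms that unfolding utility_assms_def by (metis has_derivative_continuous)+
  then show "continuous_on X u" "continuous_on X Du" by (auto intro: continuous_at_imp_continuous_on)
qed

lemma ua_concave: "utility_assms X u Du H \<Longrightarrow> concave_on X u"
  by (simp add: utility_assms_def)

lemma ua_deriv: "utility_assms X u Du H \<Longrightarrow> x \<in> X \<Longrightarrow> (u has_derivative (\<lambda>h. Du x \<bullet> h)) (at x)"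
  by (simp add: utility_assms_def)

lemma ua_deriv2: "utility_assms X u Du H \<Longrightarrow> x \<in> X \<Longrightarrow> (Du has_derivative (\<lambda>h. H x *v h)) (at x)"
  by (simp add: utility_assms_def)

lemma ua_grad:
  assumes a: "utility_assms pos_orthant u Du H" and b: "x \<in> pos_orthant" and c: "y \<in> pos_orthant"
  shows "u y \<le> u x + Du x \<bullet> (y - x)"
  by (rule concave_grad[OF ua_concave[OF a] open_pos b c ua_deriv[OF a b]])

lemma argmax_exists:
  fixes x e :: "real^'g::finite"
  assumes ua: "utility_assms pos_orthant u Du H" and x: "x \<in> pos_orthant" and k: "e $ k < 0"
  shows "\<exists>t. is_arg_max (\<lambda>\<xi>. u (x + \<xi> *\<^sub>R e)) (\<lambda>\<xi>. 0 \<le> \<xi> \<and> x + \<xi> *\<^sub>R e \<in> pos_orthant) t"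
proof -
  let ?X = "pos_orthant :: (real^'g) set"
  define C where "C = {z \<in> ?X. u x \<le> u z}"
  have cC: "closed C" using ua x unfolding utility_assms_def C_def by blast
  define F where "F = {\<xi>::real. 0 \<le> \<xi> \<and> x + \<xi> *\<^sub>R e \<in> C}"
  have "F = {0..} \<inter> (\<lambda>\<xi>. x + \<xi> *\<^sub>R e) -` C" by (auto simp: F_def)
  moreover have "closed ((\<lambda>\<xi>::real. x + \<xi> *\<^sub>R e) -` C)"
    by (rule continuous_closed_vimage[OF cC]) (intro continuous_intros)
  ultimately have "closed F" by (simp add: closed_Int)
  moreover have "bounded F"
  proof -
    have "\<bar>\<xi>\<bar> \<le> x $ k / (- e $ k)" if "\<xi> \<in> F" for \<xi>
    proof -
      have "0 \<le> \<xi>" "0 < x $ k + \<xi> * e $ k" using that by (auto simp: F_def C_def pos_orthant_def)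
      then show ?thesis using k by (simp add: field_simps)
    qed
    then show ?thesis unfolding bounded_iff real_norm_def by blast
  qed
  ultimately have cF: "compact F" by (simp add: compact_eq_bounded_closed)
  have "0 \<in> F" using x by (simp add: F_def C_def)
  then have neF: "F \<noteq> {}" by blast
  have contF: "continuous_on F (\<lambda>\<xi>. u (x + \<xi> *\<^sub>R e))"
  proof -
    have "continuous_on F (\<lambda>\<xi>. x + \<xi> *\<^sub>R e)" by (intro continuous_intros)
    moreover have "(\<lambda>\<xi>. x + \<xi> *\<^sub>R e) ` F \<subseteq> ?X" by (auto simp: F_def C_def)
    ultimately show ?thesis by (rule continuous_on_compose2[OF ua_cont(1)[OF ua]])
  qed
  obtain t where t: "t \<in> F" "\<forall>y\<in>F. u (x + y *\<^sub>R e) \<le> u (x + t *\<^sub>R e)"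
    using continuous_attains_sup[OF cF neF contF] by blast
  show ?thesis
  proof (intro exI[of _ t])
    show "is_arg_max (\<lambda>\<xi>. u (x + \<xi> *\<^sub>R e)) (\<lambda>\<xi>. 0 \<le> \<xi> \<and> x + \<xi> *\<^sub>R e \<in> pos_orthant) t"
      unfolding is_arg_max_linorder
    proof (intro conjI allI impI)
      show "0 \<le> t" "x + t *\<^sub>R e \<in> pos_orthant" using t by (auto simp: F_def C_def)
      fix y assume y: "0 \<le> y \<and> x + y *\<^sub>R e \<in> pos_orthant"
      show "u (x + y *\<^sub>R e) \<le> u (x + t *\<^sub>R e)"
      proof (cases "y \<in> F")
        case True then show ?thesis using t by auto
      next
        case False
        then have "u (x + y *\<^sub>R e) < u x" using y by (auto simp: F_def C_def)
        also have "u x \<le> u (x + t *\<^sub>R e)" using t by (auto simp: F_def C_def)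
        finally show ?thesis by simp
      qed
    qed
  qed
qed

lemma argmax_is:
  fixes x e :: "real^'g::finite"
  assumes ua: "utility_assms pos_orthant u Du H" and x: "x \<in> pos_orthant" and k: "e $ k < 0"
  shows "is_arg_max (\<lambda>\<xi>. u (x + \<xi> *\<^sub>R e)) (\<lambda>\<xi>. 0 \<le> \<xi> \<and> x + \<xi> *\<^sub>R e \<in> pos_orthant)
           (arg_max (\<lambda>\<xi>. u (x + \<xi> *\<^sub>R e)) (\<lambda>\<xi>. 0 \<le> \<xi> \<and> x + \<xi> *\<^sub>R e \<in> pos_orthant))"
  using argmax_exists[OF assms] unfolding arg_max_def by (rule someI_ex)


lemma line_deriv:
  fixes x e :: "real^'g::finite"
  assumes ua: "utility_assms pos_orthant u Du H" and p: "x + t *\<^sub>R e \<in> pos_orthant"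
  shows "((\<lambda>\<xi>. u (x + \<xi> *\<^sub>R e)) has_real_derivative (Du (x + t *\<^sub>R e) \<bullet> e)) (at t)"
proof -
  have l: "((\<lambda>\<xi>. x + \<xi> *\<^sub>R e) has_derivative (\<lambda>\<xi>. \<xi> *\<^sub>R e)) (at t)"
    by (auto intro!: derivative_eq_intros)
  have h1: "((\<lambda>\<xi>. u (x + \<xi> *\<^sub>R e)) has_derivative (\<lambda>\<xi>. Du (x + t *\<^sub>R e) \<bullet> (\<xi> *\<^sub>R e))) (at t)"
    using has_derivative_compose[OF l ua_deriv[OF ua p]] by (simp add: o_def)
  have "(\<lambda>\<xi>. Du (x + t *\<^sub>R e) \<bullet> (\<xi> *\<^sub>R e)) = (*) (Du (x + t *\<^sub>R e) \<bullet> e)"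
    by (rule ext) simp
  with h1 show ?thesis unfolding has_field_derivative_def by simp
qed

lemma line_mono:
  fixes x e :: "real^'g::finite"
  assumes ua: "utility_assms pos_orthant u Du H" and x: "x \<in> pos_orthant"
    and am: "is_arg_max (\<lambda>\<xi>. u (x + \<xi> *\<^sub>R e)) (\<lambda>\<xi>. 0 \<le> \<xi> \<and> x + \<xi> *\<^sub>R e \<in> pos_orthant) ts"
    and t: "0 \<le> t" "t \<le> ts"
  shows "x + t *\<^sub>R e \<in> pos_orthant" "u x \<le> u (x + t *\<^sub>R e)"
proof -
  have ts: "0 \<le> ts" "x + ts *\<^sub>R e \<in> pos_orthant" "u x \<le> u (x + ts *\<^sub>R e)"
    using am x unfolding is_arg_max_linorder by (auto dest: spec[of _ 0])
  have "x + t *\<^sub>R e \<in> pos_orthant \<and> u x \<le> u (x + t *\<^sub>R e)"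
  proof (cases "ts = 0")
    case True then show ?thesis using t x by simp
  next
    case False
    define l where "l = t / ts"
    have l: "0 \<le> l" "l \<le> 1" using t ts False by (auto simp: l_def)
    have eq: "x + t *\<^sub>R e = (1 - l) *\<^sub>R x + l *\<^sub>R (x + ts *\<^sub>R e)"
      using False by (simp add: l_def algebra_simps)
    have "(1 - l) *\<^sub>R x + l *\<^sub>R (x + ts *\<^sub>R e) \<in> pos_orthant"
      using convex_pos x ts(2) l unfolding convex_def by (metis diff_ge_0_iff_ge diff_add_cancel add.commute)
    moreover have "u ((1 - l) *\<^sub>R x + l *\<^sub>R (x + ts *\<^sub>R e)) \<ge> (1 - l) * u x + l * u (x + ts *\<^sub>R e)"
      by (rule concave_onD[OF ua_concave[OF ua] l x ts(2)])
    moreover have "(1 - l) * u x + l * u (x + ts *\<^sub>R e) \<ge> u x"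
    proof -
      have "l * u x \<le> l * u (x + ts *\<^sub>R e)" using l ts(3) by (intro mult_left_mono) auto
      then show ?thesis by (simp add: algebra_simps)
    qed
    ultimately show ?thesis using eq by auto
  qed
  then show "x + t *\<^sub>R e \<in> pos_orthant" "u x \<le> u (x + t *\<^sub>R e)" by auto
qed

lemma matrix_quad_bound:
  fixes A :: "real^'g::finite^'g"
  assumes "(\<Sum>i\<in>UNIV. \<Sum>j\<in>UNIV. \<bar>A $ i $ j\<bar>) \<le> M"
  shows "\<bar>(A *v e) \<bullet> e\<bar> \<le> M * norm e ^ 2"
proof -
  have "\<bar>(A *v e) \<bullet> e\<bar> \<le> norm (A *v e) * norm e" by (rule Cauchy_Schwarz_ineq2)
  also have "norm (A *v e) \<le> onorm ((*v) A) * norm e"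
    by (rule onorm[OF matrix_vector_mul_bounded_linear])
  also have "onorm ((*v) A) \<le> M" using onorm_le_matrix_component_sum[of A] assms by linarith
  finally show ?thesis by (simp add: power2_eq_square mult_right_mono mult.assoc)
qed

lemma line_lip:
  fixes x e :: "real^'g::finite"
  assumes ua: "utility_assms pos_orthant u Du H" and cK: "convex K" and KX: "K \<subseteq> pos_orthant"
    and x: "x \<in> K" and xe: "x + ts *\<^sub>R e \<in> K" and t: "0 \<le> t" "t \<le> ts"
    and M: "\<forall>z\<in>K. (\<Sum>i\<in>UNIV. \<Sum>j\<in>UNIV. \<bar>H z $ i $ j\<bar>) \<le> M"
  shows "Du x \<bullet> e - M * norm e ^ 2 * t \<le> Du (x + t *\<^sub>R e) \<bullet> e"
proof (cases "t = 0")
  case True then show ?thesis by simp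
next
  case False
  then have t0: "0 < t" using t by simp
  have inK: "x + s *\<^sub>R e \<in> K" if "0 \<le> s" "s \<le> t" for s
  proof (cases "ts = 0")
    case True
    then have "s = 0" using that t by linarith
    then show ?thesis using x by simp
  next
    case False
    define l where "l = s / ts"
    have l: "0 \<le> l" "l \<le> 1" using that t False by (auto simp: l_def)
    have eq: "x + s *\<^sub>R e = (1 - l) *\<^sub>R x + l *\<^sub>R (x + ts *\<^sub>R e)"
      using False by (simp add: l_def algebra_simps)
    show ?thesis unfolding eq
      using cK x xe l unfolding convex_def by (metis diff_ge_0_iff_ge diff_add_cancel add.commute)
  qed
  define \<phi> where "\<phi> s = Du (x + s *\<^sub>R e) \<bullet> e" for s
  have der: "(\<phi> has_derivative (\<lambda>r. (H (x + s *\<^sub>R e) *v (r *\<^sub>R e)) \<bullet> e)) (at s within {0..t})"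
    if "0 \<le> s" "s \<le> t" for s
  proof -
    have p: "x + s *\<^sub>R e \<in> pos_orthant" using inK[OF that] KX by auto
    have l: "((\<lambda>\<xi>. x + \<xi> *\<^sub>R e) has_derivative (\<lambda>\<xi>. \<xi> *\<^sub>R e)) (at s)"
      by (auto intro!: derivative_eq_intros)
    have "((\<lambda>\<xi>. Du (x + \<xi> *\<^sub>R e)) has_derivative (\<lambda>r. H (x + s *\<^sub>R e) *v (r *\<^sub>R e))) (at s)"
      using has_derivative_compose[OF l ua_deriv2[OF ua p]] by (simp add: o_def)
    from bounded_linear.has_derivative[OF bounded_linear_inner_left this, of e]
    have "(\<phi> has_derivative (\<lambda>r. (H (x + s *\<^sub>R e) *v (r *\<^sub>R e)) \<bullet> e)) (at s)"
      unfolding \<phi>_def[abs_def] .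
    then show ?thesis by (rule has_derivative_at_withinI)
  qed
  obtain z where z: "z \<in> {0<..<t}" and eqz: "\<phi> t - \<phi> 0 = (H (x + z *\<^sub>R e) *v ((t - 0) *\<^sub>R e)) \<bullet> e"
    using mvt_simple[OF t0 der] by blast
  have zK: "x + z *\<^sub>R e \<in> K" using z inK by auto
  have "\<bar>(H (x + z *\<^sub>R e) *v e) \<bullet> e\<bar> \<le> M * norm e ^ 2"
    by (rule matrix_quad_bound) (use M zK in auto)
  moreover have "\<phi> t - \<phi> 0 = t * ((H (x + z *\<^sub>R e) *v e) \<bullet> e)"
    using eqz by (simp add: matrix_vector_mult_scaleR)
  ultimately have "\<phi> t - \<phi> 0 \<ge> - (t * (M * norm e ^ 2))"
  proof -
    assume a1: "\<bar>(H (x + z *\<^sub>R e) *v e) \<bullet> e\<bar> \<le> M * norm e ^ 2"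
      and a2: "\<phi> t - \<phi> 0 = t * ((H (x + z *\<^sub>R e) *v e) \<bullet> e)"
    have "- (M * norm e ^ 2) \<le> (H (x + z *\<^sub>R e) *v e) \<bullet> e" using a1 by (simp add: abs_le_iff)
    then have "t * (- (M * norm e ^ 2)) \<le> t * ((H (x + z *\<^sub>R e) *v e) \<bullet> e)"
      using t0 by (intro mult_left_mono) auto
    then show ?thesis using a2 by simp
  qed
  then show ?thesis by (simp add: \<phi>_def algebra_simps)
qed

lemma line_gain:
  fixes x e :: "real^'g::finite"
  assumes ua: "utility_assms pos_orthant u Du H" and x: "x \<in> pos_orthant"
    and am: "is_arg_max (\<lambda>\<xi>. u (x + \<xi> *\<^sub>R e)) (\<lambda>\<xi>. 0 \<le> \<xi> \<and> x + \<xi> *\<^sub>R e \<in> pos_orthant) ts"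
    and a: "0 < a" and B: "0 < B" and lip: "\<forall>t. 0 \<le> t \<and> t \<le> ts \<longrightarrow> a - B * t \<le> Du (x + t *\<^sub>R e) \<bullet> e"
  shows "u x + a ^ 2 / (4 * B) \<le> u (x + ts *\<^sub>R e)"
proof -
  have ts: "0 \<le> ts" "x + ts *\<^sub>R e \<in> pos_orthant"
    and tsmax: "\<And>y. 0 \<le> y \<Longrightarrow> x + y *\<^sub>R e \<in> pos_orthant \<Longrightarrow> u (x + y *\<^sub>R e) \<le> u (x + ts *\<^sub>R e)"
    using am unfolding is_arg_max_linorder by auto
  have big: "a / B \<le> ts"
  proof (rule ccontr)
    assume "\<not> a / B \<le> ts"
    then have "ts < a / B" by simp
    then have "B * ts < a" using B by (simp add: field_simps)
    then have pos: "0 < Du (x + ts *\<^sub>R e) \<bullet> e" using lip ts by force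
    obtain d where d: "d > 0" "\<forall>h>0. h < d \<longrightarrow> u (x + ts *\<^sub>R e) < u (x + (ts + h) *\<^sub>R e)"
      using DERIV_pos_inc_right[OF line_deriv[OF ua ts(2)] pos] by blast
    obtain r where r: "r > 0" "ball (x + ts *\<^sub>R e) r \<subseteq> pos_orthant"
      using open_pos ts(2) open_contains_ball by blast
    define h where "h = min d (r / (norm e + 1)) / 2"
    have "0 < norm e + 1" by (simp add: add_nonneg_pos)
    then have "0 < r / (norm e + 1)" using r(1) by (rule divide_pos_pos[rotated])
    then have h: "0 < h" "h < d" using d by (auto simp: h_def)
    have "h * norm e < r"
    proof -
      have "h \<le> r / (norm e + 1) / 2" unfolding h_def by (intro divide_right_mono min.cobounded2) simp
      then have "h * (norm e + 1) \<le> r / (norm e + 1) / 2 * (norm e + 1)"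
        by (rule mult_right_mono) simp
      also have "\<dots> = r / 2"
      proof -
        have "\<And>N::real. N > 0 \<Longrightarrow> r / N / 2 * N = r / 2" by (simp add: field_simps)
        then show ?thesis using \<open>0 < norm e + 1\<close> by blast
      qed
      finally have "h * (norm e + 1) \<le> r / 2" .
      moreover have "h * norm e \<le> h * (norm e + 1)" using h by (simp add: distrib_left)
      ultimately show ?thesis using r by linarith
    qed
    then have "x + (ts + h) *\<^sub>R e \<in> ball (x + ts *\<^sub>R e) r"
      using h by (simp add: dist_norm algebra_simps)
    then have "x + (ts + h) *\<^sub>R e \<in> pos_orthant" using r by auto
    then have "u (x + (ts + h) *\<^sub>R e) \<le> u (x + ts *\<^sub>R e)" using tsmax ts h by simp
    then show False using d h by force
  qed
  define \<eta> where "\<eta> = a / (2 * B)"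
  have \<eta>: "0 \<le> \<eta>" "\<eta> \<le> ts"
    using a B big by (auto simp: \<eta>_def field_simps)
  have q: "x + \<eta> *\<^sub>R e \<in> pos_orthant" using line_mono[OF ua x am \<eta>] by simp
  have uq: "u (x + \<eta> *\<^sub>R e) \<le> u (x + ts *\<^sub>R e)" using tsmax q \<eta> by simp
  have g: "u x \<le> u (x + \<eta> *\<^sub>R e) + Du (x + \<eta> *\<^sub>R e) \<bullet> (x - (x + \<eta> *\<^sub>R e))"
    by (rule ua_grad[OF ua q x])
  have "a - B * \<eta> \<le> Du (x + \<eta> *\<^sub>R e) \<bullet> e" using lip \<eta> by simp
  moreover have "a - B * \<eta> = a / 2" using B by (simp add: \<eta>_def field_simps)
  ultimately have "a / 2 * \<eta> \<le> \<eta> * (Du (x + \<eta> *\<^sub>R e) \<bullet> e)"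
    using \<eta> by (simp add: mult.commute mult_left_mono)
  moreover have "a / 2 * \<eta> = a ^ 2 / (4 * B)" using B by (simp add: \<eta>_def power2_eq_square)
  moreover have "Du (x + \<eta> *\<^sub>R e) \<bullet> (x - (x + \<eta> *\<^sub>R e)) = - (\<eta> * (Du (x + \<eta> *\<^sub>R e) \<bullet> e))"
    by (simp add: inner_diff_right)
  ultimately show ?thesis using g uq by linarith
qed


lemma inner_dirv:
  fixes v :: "real^'g::finite"
  assumes "j \<noteq> g0"
  shows "v \<bullet> dirv g0 j \<pi> = v $ g0 * \<pi> - v $ j"
proof -
  have "v \<bullet> dirv g0 j \<pi> = (\<Sum>k\<in>UNIV. (if k = g0 then v $ g0 * \<pi> else 0) + (if k = j then - v $ j else 0))"
    unfolding inner_vec_def dirv_def using assms by (intro sum.cong) auto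
  also have "\<dots> = v $ g0 * \<pi> - v $ j" by (simp add: sum.distrib)
  finally show ?thesis .
qed

lemma dirv_nth: "j \<noteq> g0 \<Longrightarrow> dirv g0 j \<pi> $ g0 = \<pi>" "j \<noteq> g0 \<Longrightarrow> dirv g0 j \<pi> $ j = -1"
  by (auto simp: dirv_def)

lemma norm_dirv: "j \<noteq> g0 \<Longrightarrow> norm (dirv g0 j \<pi> :: real^'g::finite) ^ 2 = \<pi> ^ 2 + 1"
  unfolding power2_norm_eq_inner by (simp add: inner_dirv dirv_nth power2_eq_square)

lemma thr_pos:
  assumes "utility_assms pos_orthant u Du H" "x \<in> pos_orthant"
  shows "0 < thr g0 Du x j"
  using assms unfolding utility_assms_def thr_def by auto

lemma xi_minus_alt:
  "xi_minus X u g0 j x \<pi> = arg_max (\<lambda>\<xi>. u (x + \<xi> *\<^sub>R (- dirv g0 j \<pi>))) (\<lambda>\<xi>. 0 \<le> \<xi> \<and> x + \<xi> *\<^sub>R (- dirv g0 j \<pi>) \<in> X)"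
  by (simp add: xi_minus_def)

lemma trade_struct:
  fixes s s' :: "nat \<Rightarrow> real^'g::finite"
  assumes ua: "\<forall>i\<in>{1..m}. utility_assms pos_orthant (u i) (Du i) (H i)"
    and s: "\<forall>i\<in>{1..m}. s i \<in> pos_orthant"
    and dp: "\<forall>i\<in>{1..m}. \<forall>j. j \<noteq> g0 \<longrightarrow> 0 < \<delta> i j"
    and st: "trade_step pos_orthant u Du g0 m \<delta> s s'"
  obtains i1 i2 j \<pi> \<xi>p \<xi>m \<xi> where "i1 \<in> {1..m}" "i2 \<in> {1..m}" "i1 \<noteq> i2" "j \<noteq> g0" "0 < \<pi>"
    "thr g0 (Du i1) (s i1) j + \<delta> i1 j \<le> \<pi>" "\<pi> \<le> thr g0 (Du i2) (s i2) j - \<delta> i2 j"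
    "is_arg_max (\<lambda>t. u i1 (s i1 + t *\<^sub>R dirv g0 j \<pi>)) (\<lambda>t. 0 \<le> t \<and> s i1 + t *\<^sub>R dirv g0 j \<pi> \<in> pos_orthant) \<xi>p"
    "is_arg_max (\<lambda>t. u i2 (s i2 + t *\<^sub>R (- dirv g0 j \<pi>))) (\<lambda>t. 0 \<le> t \<and> s i2 + t *\<^sub>R (- dirv g0 j \<pi>) \<in> pos_orthant) \<xi>m"
    "\<xi> = min \<xi>p \<xi>m"
    "s' = s(i1 := s i1 + \<xi> *\<^sub>R dirv g0 j \<pi>, i2 := s i2 + \<xi> *\<^sub>R (- dirv g0 j \<pi>))"
proof -
  obtain i1 i2 j \<pi> where i: "i1 \<in> {1..m}" "i2 \<in> {1..m}" "j \<noteq> g0"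
    and thr: "thr g0 (Du i1) (s i1) j + \<delta> i1 j \<le> thr g0 (Du i2) (s i2) j - \<delta> i2 j"
      "thr g0 (Du i1) (s i1) j + \<delta> i1 j \<le> \<pi>" "\<pi> \<le> thr g0 (Du i2) (s i2) j - \<delta> i2 j"
    and s': "s' = s(i1 := s i1 + min (xi_plus pos_orthant (u i1) g0 j (s i1) \<pi>) (xi_minus pos_orthant (u i2) g0 j (s i2) \<pi>) *\<^sub>R dirv g0 j \<pi>,
                   i2 := s i2 - min (xi_plus pos_orthant (u i1) g0 j (s i1) \<pi>) (xi_minus pos_orthant (u i2) g0 j (s i2) \<pi>) *\<^sub>R dirv g0 j \<pi>)"
    using st unfolding trade_step_def Let_def by blast
  have dpos: "0 < \<delta> i1 j" "0 < \<delta> i2 j" using dp i by auto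
  have "i1 \<noteq> i2"
  proof
    assume "i1 = i2"
    then show False using thr(1) dpos by simp
  qed
  have "0 < thr g0 (Du i1) (s i1) j" by (rule thr_pos) (use ua s i in auto)
  then have pi: "0 < \<pi>" using thr(2) dpos by linarith
  have a1: "is_arg_max (\<lambda>t. u i1 (s i1 + t *\<^sub>R dirv g0 j \<pi>)) (\<lambda>t. 0 \<le> t \<and> s i1 + t *\<^sub>R dirv g0 j \<pi> \<in> pos_orthant)
      (xi_plus pos_orthant (u i1) g0 j (s i1) \<pi>)"
    unfolding xi_plus_def by (rule argmax_is[of "u i1" "Du i1" "H i1" _ _ j]) (use ua s i in \<open>auto simp: dirv_nth\<close>)
  have a2: "is_arg_max (\<lambda>t. u i2 (s i2 + t *\<^sub>R (- dirv g0 j \<pi>))) (\<lambda>t. 0 \<le> t \<and> s i2 + t *\<^sub>R (- dirv g0 j \<pi>) \<in> pos_orthant)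
      (xi_minus pos_orthant (u i2) g0 j (s i2) \<pi>)"
    unfolding xi_minus_alt by (rule argmax_is[of "u i2" "Du i2" "H i2" _ _ g0]) (use ua s i pi in \<open>auto simp: dirv_nth\<close>)
  show ?thesis
    by (rule that[OF i(1,2) \<open>i1 \<noteq> i2\<close> i(3) pi thr(2,3) a1 a2 refl]) (simp add: s')
qed

lemma sum_update2:
  fixes s :: "nat \<Rightarrow> 'a::ab_group_add"
  assumes "i1 \<in> A" "i2 \<in> A" "i1 \<noteq> i2" "finite A"
  shows "(\<Sum>i\<in>A. (s(i1 := s i1 + v, i2 := s i2 + - v)) i) = (\<Sum>i\<in>A. s i)"
proof -
  have "(\<Sum>i\<in>A. (s(i1 := s i1 + v, i2 := s i2 + - v)) i)
      = (\<Sum>i\<in>A. s i + ((if i = i1 then v else 0) + (if i = i2 then - v else 0)))"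
    using assms by (intro sum.cong) auto
  also have "\<dots> = (\<Sum>i\<in>A. s i)" using assms by (simp add: sum.distrib)
  finally show ?thesis .
qed

lemma trade_basic:
  fixes s s' :: "nat \<Rightarrow> real^'g::finite"
  assumes ua: "\<forall>i\<in>{1..m}. utility_assms pos_orthant (u i) (Du i) (H i)"
    and s: "\<forall>i\<in>{1..m}. s i \<in> pos_orthant"
    and dp: "\<forall>i\<in>{1..m}. \<forall>j. j \<noteq> g0 \<longrightarrow> 0 < \<delta> i j"
    and st: "trade_step pos_orthant u Du g0 m \<delta> s s'"
  shows "\<forall>i\<in>{1..m}. s' i \<in> pos_orthant \<and> u i (s i) \<le> u i (s' i)"
    "(\<Sum>i\<in>{1..m}. s' i) = (\<Sum>i\<in>{1..m}. s i)"
proof -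
  obtain i1 i2 j \<pi> \<xi>p \<xi>m \<xi> where i: "i1 \<in> {1..m}" "i2 \<in> {1..m}" "i1 \<noteq> i2" "j \<noteq> g0" "0 < \<pi>"
    and a1: "is_arg_max (\<lambda>t. u i1 (s i1 + t *\<^sub>R dirv g0 j \<pi>)) (\<lambda>t. 0 \<le> t \<and> s i1 + t *\<^sub>R dirv g0 j \<pi> \<in> pos_orthant) \<xi>p"
    and a2: "is_arg_max (\<lambda>t. u i2 (s i2 + t *\<^sub>R (- dirv g0 j \<pi>))) (\<lambda>t. 0 \<le> t \<and> s i2 + t *\<^sub>R (- dirv g0 j \<pi>) \<in> pos_orthant) \<xi>m"
    and xi: "\<xi> = min \<xi>p \<xi>m"
    and s': "s' = s(i1 := s i1 + \<xi> *\<^sub>R dirv g0 j \<pi>, i2 := s i2 + \<xi> *\<^sub>R (- dirv g0 j \<pi>))"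
    by (rule trade_struct[OF ua s dp st])
  have p: "0 \<le> \<xi>p" "0 \<le> \<xi>m" using a1 a2 unfolding is_arg_max_linorder by auto
  have m1: "s i1 + \<xi> *\<^sub>R dirv g0 j \<pi> \<in> pos_orthant \<and> u i1 (s i1) \<le> u i1 (s i1 + \<xi> *\<^sub>R dirv g0 j \<pi>)"
    using line_mono[of "u i1" "Du i1" "H i1", OF _ _ a1, of \<xi>] ua s i p xi by auto
  have m2: "s i2 + \<xi> *\<^sub>R (- dirv g0 j \<pi>) \<in> pos_orthant \<and> u i2 (s i2) \<le> u i2 (s i2 + \<xi> *\<^sub>R (- dirv g0 j \<pi>))"
    using line_mono[of "u i2" "Du i2" "H i2", OF _ _ a2, of \<xi>] ua s i p xi by auto
  show "\<forall>i\<in>{1..m}. s' i \<in> pos_orthant \<and> u i (s i) \<le> u i (s' i)"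
    using m1 m2 s i(3) by (auto simp: s')
  show "(\<Sum>i\<in>{1..m}. s' i) = (\<Sum>i\<in>{1..m}. s i)"
    unfolding s' scaleR_minus_right by (rule sum_update2) (use i in auto)
qed

lemma trade_gain:
  fixes s s' :: "nat \<Rightarrow> real^'g::finite"
  assumes ua: "\<forall>i\<in>{1..m}. utility_assms pos_orthant (u i) (Du i) (H i)"
    and K: "\<forall>i\<in>{1..m}. convex (K i) \<and> K i \<subseteq> pos_orthant"
    and s: "\<forall>i\<in>{1..m}. s i \<in> K i" and s'K: "\<forall>i\<in>{1..m}. s' i \<in> K i"
    and c: "0 < c" "\<forall>i\<in>{1..m}. \<forall>z\<in>K i. c \<le> Du i z $ g0"
    and M: "0 \<le> M" "\<forall>i\<in>{1..m}. \<forall>z\<in>K i. (\<Sum>a\<in>UNIV. \<Sum>b\<in>UNIV. \<bar>H i z $ a $ b\<bar>) \<le> M"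
    and P: "\<forall>i\<in>{1..m}. \<forall>z\<in>K i. \<forall>j. thr g0 (Du i) z j \<le> P"
    and d0: "0 < d0" "\<forall>i\<in>{1..m}. \<forall>j. j \<noteq> g0 \<longrightarrow> d0 \<le> \<delta> i j"
    and st: "trade_step pos_orthant u Du g0 m \<delta> s s'"
  shows "\<exists>i\<in>{1..m}. u i (s i) + (c * d0) ^ 2 / (4 * (M * (P ^ 2 + 1) + 1)) \<le> u i (s' i)"
proof -
  have sX: "\<forall>i\<in>{1..m}. s i \<in> pos_orthant" using s K by blast
  have dp: "\<forall>i\<in>{1..m}. \<forall>j. j \<noteq> g0 \<longrightarrow> 0 < \<delta> i j"
    using d0 by (meson less_le_trans)
  obtain i1 i2 j \<pi> \<xi>p \<xi>m \<xi> where i: "i1 \<in> {1..m}" "i2 \<in> {1..m}" "i1 \<noteq> i2" "j \<noteq> g0" "0 < \<pi>"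
    and thr: "thr g0 (Du i1) (s i1) j + \<delta> i1 j \<le> \<pi>" "\<pi> \<le> thr g0 (Du i2) (s i2) j - \<delta> i2 j"
    and a1: "is_arg_max (\<lambda>t. u i1 (s i1 + t *\<^sub>R dirv g0 j \<pi>)) (\<lambda>t. 0 \<le> t \<and> s i1 + t *\<^sub>R dirv g0 j \<pi> \<in> pos_orthant) \<xi>p"
    and a2: "is_arg_max (\<lambda>t. u i2 (s i2 + t *\<^sub>R (- dirv g0 j \<pi>))) (\<lambda>t. 0 \<le> t \<and> s i2 + t *\<^sub>R (- dirv g0 j \<pi>) \<in> pos_orthant) \<xi>m"
    and xi: "\<xi> = min \<xi>p \<xi>m"
    and s': "s' = s(i1 := s i1 + \<xi> *\<^sub>R dirv g0 j \<pi>, i2 := s i2 + \<xi> *\<^sub>R (- dirv g0 j \<pi>))"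
    by (rule trade_struct[OF ua sX dp st])
  define B where "B = M * (P ^ 2 + 1) + 1"
  define a where "a = c * d0"
  have a: "0 < a" using c d0 by (simp add: a_def)
  have B: "0 < B" using M by (simp add: B_def add_nonneg_pos)
  have "thr g0 (Du i2) (s i2) j \<le> P" using P i s by blast
  moreover have "0 < \<delta> i2 j" using dp i by blast
  ultimately have piP: "\<pi> \<le> P" using thr(2) by linarith
  have piP2: "\<pi> ^ 2 \<le> P ^ 2" using piP i(5) by (intro power_mono) auto
  have MB: "M * norm (dirv g0 j \<pi> :: real^'g) ^ 2 \<le> B"
  proof -
    have "M * (\<pi> ^ 2 + 1) \<le> M * (P ^ 2 + 1)" using M(1) piP2 by (intro mult_left_mono) auto
    then show ?thesis unfolding B_def norm_dirv[OF i(4)] by linarith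
  qed
  have MB2: "M * norm (- dirv g0 j \<pi> :: real^'g) ^ 2 \<le> B" using MB by simp
  have gain: "u i (s i) + a ^ 2 / (4 * B) \<le> u i (s i + ts *\<^sub>R e)"
    if ii: "i \<in> {1..m}" and am: "is_arg_max (\<lambda>t. u i (s i + t *\<^sub>R e)) (\<lambda>t. 0 \<le> t \<and> s i + t *\<^sub>R e \<in> pos_orthant) ts"
      and inK: "s i + ts *\<^sub>R e \<in> K i" and ae: "a \<le> Du i (s i) \<bullet> e" and Me: "M * norm e ^ 2 \<le> B"
    for i ts e
  proof (rule line_gain[OF _ _ am a B])
    show "utility_assms pos_orthant (u i) (Du i) (H i)" using ua ii by auto
    show "s i \<in> pos_orthant" using sX ii by auto
    show "\<forall>t. 0 \<le> t \<and> t \<le> ts \<longrightarrow> a - B * t \<le> Du i (s i + t *\<^sub>R e) \<bullet> e"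
    proof (intro allI impI)
      fix t assume t: "0 \<le> t \<and> t \<le> ts"
      have "Du i (s i) \<bullet> e - M * norm e ^ 2 * t \<le> Du i (s i + t *\<^sub>R e) \<bullet> e"
        by (rule line_lip[of "u i" "Du i" "H i" "K i" "s i" ts e t M]) (use ua ii K s inK t M in auto)
      moreover have "M * norm e ^ 2 * t \<le> B * t" using Me t by (intro mult_right_mono) auto
      ultimately show "a - B * t \<le> Du i (s i + t *\<^sub>R e) \<bullet> e" using ae by linarith
    qed
  qed
  have Du0: "c \<le> Du i (s i) $ g0" if "i \<in> {1..m}" for i using c s that by auto
  have Dupos: "0 < Du i (s i) $ g0" if "i \<in> {1..m}" for i using Du0[OF that] c(1) by linarith
  have ae1: "a \<le> Du i1 (s i1) \<bullet> dirv g0 j \<pi>"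
  proof -
    have "Du i1 (s i1) \<bullet> dirv g0 j \<pi> = Du i1 (s i1) $ g0 * (\<pi> - thr g0 (Du i1) (s i1) j)"
      using Dupos[OF i(1)] by (simp add: inner_dirv[OF i(4)] thr_def field_simps)
    moreover have "d0 \<le> \<delta> i1 j" using d0 i by blast
    then have "d0 \<le> \<pi> - thr g0 (Du i1) (s i1) j" using thr(1) by linarith
    moreover have "c * d0 \<le> Du i1 (s i1) $ g0 * (\<pi> - thr g0 (Du i1) (s i1) j)"
      using Du0[OF i(1)] c d0 \<open>d0 \<le> \<pi> - thr g0 (Du i1) (s i1) j\<close> by (intro mult_mono) auto
    ultimately show ?thesis unfolding a_def by simp
  qed
  have ae2: "a \<le> Du i2 (s i2) \<bullet> (- dirv g0 j \<pi>)"
  proof -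
    have "Du i2 (s i2) \<bullet> (- dirv g0 j \<pi>) = Du i2 (s i2) $ g0 * (thr g0 (Du i2) (s i2) j - \<pi>)"
      using Dupos[OF i(2)] by (simp add: inner_dirv[OF i(4)] thr_def field_simps)
    moreover have "d0 \<le> \<delta> i2 j" using d0 i by blast
    then have "d0 \<le> thr g0 (Du i2) (s i2) j - \<pi>" using thr(2) by linarith
    moreover have "c * d0 \<le> Du i2 (s i2) $ g0 * (thr g0 (Du i2) (s i2) j - \<pi>)"
      using Du0[OF i(2)] c d0 \<open>d0 \<le> thr g0 (Du i2) (s i2) j - \<pi>\<close> by (intro mult_mono) auto
    ultimately show ?thesis unfolding a_def by simp
  qed
  have s'1: "s' i1 = s i1 + \<xi> *\<^sub>R dirv g0 j \<pi>" "s' i2 = s i2 + \<xi> *\<^sub>R (- dirv g0 j \<pi>)"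
    using i(3) by (auto simp: s')
  show ?thesis
  proof (cases "\<xi>p \<le> \<xi>m")
    case True
    then have "\<xi> = \<xi>p" using xi by simp
    moreover have "s' i1 \<in> K i1" using s'K i(1) by blast
    ultimately have "s i1 + \<xi>p *\<^sub>R dirv g0 j \<pi> \<in> K i1" using s'1 by simp
    from gain[OF i(1) a1 this ae1 MB]
    have "u i1 (s i1) + a ^ 2 / (4 * B) \<le> u i1 (s' i1)" using s'1 \<open>\<xi> = \<xi>p\<close> by simp
    then show ?thesis using i(1) unfolding a_def B_def by blast
  next
    case False
    then have "\<xi> = \<xi>m" using xi by simp
    moreover have "s' i2 \<in> K i2" using s'K i(2) by blast
    ultimately have "s i2 + \<xi>m *\<^sub>R (- dirv g0 j \<pi>) \<in> K i2" using s'1 by simp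
    from gain[OF i(2) a2 this ae2 MB2]
    have "u i2 (s i2) + a ^ 2 / (4 * B) \<le> u i2 (s' i2)" using s'1 \<open>\<xi> = \<xi>m\<close> by simp
    then show ?thesis using i(2) unfolding a_def B_def by blast
  qed
qed


definition Kset :: "(real^'g::finite \<Rightarrow> real) \<Rightarrow> real^'g \<Rightarrow> real^'g \<Rightarrow> (real^'g) set" where
  "Kset v x0 T = {z \<in> pos_orthant. v x0 \<le> v z \<and> (\<forall>k. z $ k \<le> T $ k)}"

lemma Kset_sub: "Kset v x0 T \<subseteq> pos_orthant"
  by (auto simp: Kset_def)

lemma Kset_convex:
  assumes ua: "utility_assms pos_orthant u Du H"
  shows "convex (Kset u x0 T)"
  unfolding convex_def
proof (intro ballI allI impI)
  fix x y :: "real^'a" and a b :: real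
  assume x: "x \<in> Kset u x0 T" and y: "y \<in> Kset u x0 T" and ab: "0 \<le> a" "0 \<le> b" "a + b = 1"
  have xX: "x \<in> pos_orthant" and yX: "y \<in> pos_orthant" using x y by (auto simp: Kset_def)
  have inX: "a *\<^sub>R x + b *\<^sub>R y \<in> pos_orthant" using convex_pos xX yX ab unfolding convex_def by blast
  have "u (a *\<^sub>R x + b *\<^sub>R y) \<ge> a * u x + b * u y"
    using ua_concave[OF ua] xX yX ab unfolding concave_on_iff by blast
  moreover have "a * u x0 \<le> a * u x" "b * u x0 \<le> b * u y"
    using x y ab by (auto simp: Kset_def intro!: mult_left_mono)
  ultimately have "u x0 \<le> u (a *\<^sub>R x + b *\<^sub>R y)"
  proof -
    assume h: "a * u x + b * u y \<le> u (a *\<^sub>R x + b *\<^sub>R y)" "a * u x0 \<le> a * u x" "b * u x0 \<le> b * u y"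
    have "u x0 = a * u x0 + b * u x0" using ab by (metis distrib_right mult_1)
    then show ?thesis using h by linarith
  qed
  moreover have "(a *\<^sub>R x + b *\<^sub>R y) $ k \<le> T $ k" for k
  proof -
    have "a * x $ k \<le> a * T $ k" "b * y $ k \<le> b * T $ k"
      using x y ab by (auto simp: Kset_def intro!: mult_left_mono)
    then have "a * x $ k + b * y $ k \<le> (a + b) * T $ k" by (simp add: distrib_right)
    then show ?thesis using ab by simp
  qed
  ultimately show "a *\<^sub>R x + b *\<^sub>R y \<in> Kset u x0 T" using inX by (auto simp: Kset_def)
qed

lemma Kset_compact:
  fixes x0 :: "real^'g::finite"
  assumes ua: "utility_assms pos_orthant u Du H" and x0: "x0 \<in> pos_orthant"
  shows "compact (Kset u x0 T)"
proof -
  have c1: "closed {z \<in> pos_orthant. u x0 \<le> u z}" using ua x0 unfolding utility_assms_def by blast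
  have c2: "closed (\<Inter>k. {z::real^'g. z $ k \<le> T $ k})"
    by (intro closed_INT) (auto intro: closed_halfspace_component_le_cart)
  have eq: "Kset u x0 T = {z \<in> pos_orthant. u x0 \<le> u z} \<inter> (\<Inter>k. {z::real^'g. z $ k \<le> T $ k})"
    by (auto simp: Kset_def)
  have cl: "closed (Kset u x0 T)" unfolding eq using c1 c2 by (rule closed_Int)
  have "norm z \<le> (\<Sum>k\<in>UNIV. T $ k)" if "z \<in> Kset u x0 T" for z
  proof -
    have "norm z \<le> (\<Sum>k\<in>UNIV. \<bar>z $ k\<bar>)" by (rule norm_le_l1_cart)
    also have "\<dots> \<le> (\<Sum>k\<in>UNIV. T $ k)"
    proof (rule sum_mono)
      fix k
      have "0 < z $ k" "z $ k \<le> T $ k" using that by (auto simp: Kset_def pos_orthant_def)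
      then show "\<bar>z $ k\<bar> \<le> T $ k" by simp
    qed
    finally show ?thesis .
  qed
  then have "bounded (Kset u x0 T)" unfolding bounded_iff by blast
  with cl show ?thesis by (simp add: compact_eq_bounded_closed)
qed

lemma fin_lower0:
  fixes g :: "'b \<Rightarrow> real"
  assumes "finite B" "\<forall>b\<in>B. 0 < g b"
  shows "\<exists>c>0. \<forall>b\<in>B. c \<le> g b"
  using assms
proof (induction B rule: finite_induct)
  case empty then show ?case by (auto intro: exI[of _ 1])
next
  case (insert x F)
  then obtain c where c: "c > 0" "\<forall>b\<in>F. c \<le> g b" by auto
  show ?case using insert c by (intro exI[of _ "min c (g x)"]) auto
qed

lemma fin_lower:
  fixes f :: "'a \<Rightarrow> 'b \<Rightarrow> real"
  assumes "finite A" "\<forall>i\<in>A. \<exists>c>0. \<forall>z\<in>S i. c \<le> f i z"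
  shows "\<exists>c>0. \<forall>i\<in>A. \<forall>z\<in>S i. c \<le> f i z"
  using assms
proof (induction A rule: finite_induct)
  case empty then show ?case by (auto intro: exI[of _ 1])
next
  case (insert x F)
  then obtain c where c: "c > 0" "\<forall>i\<in>F. \<forall>z\<in>S i. c \<le> f i z" by auto
  obtain c' where c': "c' > 0" "\<forall>z\<in>S x. c' \<le> f x z" using insert by auto
  have "\<forall>i\<in>insert x F. \<forall>z\<in>S i. min c c' \<le> f i z" using c c' by (auto simp: min_le_iff_disj)
  then show ?case using c c' by (intro exI[of _ "min c c'"]) auto
qed

lemma fin_upper:
  fixes f :: "'a \<Rightarrow> 'b \<Rightarrow> real"
  assumes "finite A" "\<forall>i\<in>A. \<exists>M. \<forall>z\<in>S i. f i z \<le> M"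
  shows "\<exists>M\<ge>0. \<forall>i\<in>A. \<forall>z\<in>S i. f i z \<le> M"
  using assms
proof (induction A rule: finite_induct)
  case empty then show ?case by auto
next
  case (insert x F)
  then obtain M where M: "M \<ge> 0" "\<forall>i\<in>F. \<forall>z\<in>S i. f i z \<le> M" by auto
  obtain M' where M': "\<forall>z\<in>S x. f x z \<le> M'" using insert by auto
  show ?case using M M' by (intro exI[of _ "max M M'"]) (auto simp: le_max_iff_disj)
qed

lemma box_from_sum:
  fixes y :: "nat \<Rightarrow> real^'g::finite"
  assumes "finite A" "i \<in> A" "\<forall>l\<in>A. y l \<in> pos_orthant" "(\<Sum>l\<in>A. y l) = T"
  shows "y i $ k \<le> T $ k"
proof -
  have "y i $ k \<le> (\<Sum>l\<in>A. y l $ k)"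
    by (rule member_le_sum) (use assms in \<open>auto simp: pos_orthant_def less_imp_le\<close>)
  also have "\<dots> = T $ k" using assms(4) by (simp flip: sum_component)
  finally show ?thesis .
qed

lemma sum_gain:
  fixes f g :: "nat \<Rightarrow> real"
  assumes "finite A" "\<forall>l\<in>A. g l \<le> f l" "\<exists>i\<in>A. g i + \<gamma> \<le> f i"
  shows "(\<Sum>l\<in>A. g l) + \<gamma> \<le> (\<Sum>l\<in>A. f l)"
proof -
  obtain i where i: "i \<in> A" "g i + \<gamma> \<le> f i" using assms by blast
  have "f i - g i \<le> (\<Sum>l\<in>A. f l - g l)"
    by (rule member_le_sum) (use assms i in auto)
  then show ?thesis using i by (simp add: sum_subtractf)
qed

lemma cont_bounded_norm:
  assumes "compact K" "continuous_on K f"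
  shows "\<exists>N. \<forall>z\<in>K. norm (f z) \<le> N"
  using compact_imp_bounded[OF compact_continuous_image[OF assms(2,1)]] unfolding bounded_iff by blast

lemma constants_exist:
  fixes x0 :: "nat \<Rightarrow> real^'g::finite"
  assumes ua: "\<forall>i\<in>{1..m}. utility_assms pos_orthant (u i) (Du i) (H i)"
    and x0: "\<forall>i\<in>{1..m}. x0 i \<in> Kset (u i) (x0 i) T"
  shows "\<exists>c M P U. 0 < c \<and> 0 \<le> M \<and>
     (\<forall>i\<in>{1..m}. \<forall>z\<in>Kset (u i) (x0 i) T. c \<le> Du i z $ g0) \<and>
     (\<forall>i\<in>{1..m}. \<forall>z\<in>Kset (u i) (x0 i) T. (\<Sum>a\<in>UNIV. \<Sum>b\<in>UNIV. \<bar>H i z $ a $ b\<bar>) \<le> M) \<and>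
     (\<forall>i\<in>{1..m}. \<forall>z\<in>Kset (u i) (x0 i) T. \<forall>j. thr g0 (Du i) z j \<le> P) \<and>
     (\<forall>i\<in>{1..m}. \<forall>z\<in>Kset (u i) (x0 i) T. u i z \<le> U)"
proof -
  let ?K = "\<lambda>i. Kset (u i) (x0 i) T"
  have cK: "compact (?K i)" if "i \<in> {1..m}" for i
  proof -
    have "x0 i \<in> pos_orthant" using x0 that Kset_sub by blast
    then show ?thesis using Kset_compact[of "u i" "Du i" "H i" "x0 i" T] ua that by blast
  qed
  have KX: "?K i \<subseteq> pos_orthant" for i by (rule Kset_sub)
  have cDu: "continuous_on (?K i) (Du i)" if "i \<in> {1..m}" for i
    using ua_cont(2)[of pos_orthant "u i" "Du i" "H i"] ua that by (rule_tac continuous_on_subset[OF _ KX]) blast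
  have cu: "continuous_on (?K i) (u i)" if "i \<in> {1..m}" for i
    using ua_cont(1)[of pos_orthant "u i" "Du i" "H i"] ua that by (rule_tac continuous_on_subset[OF _ KX]) blast
  have cH: "continuous_on (?K i) (H i)" if "i \<in> {1..m}" for i
    using ua that unfolding utility_assms_def by (rule_tac continuous_on_subset[OF _ KX]) blast
  have "\<forall>i\<in>{1..m}. \<exists>c>0. \<forall>z\<in>?K i. c \<le> Du i z $ g0"
  proof
    fix i assume i: "i \<in> {1..m}"
    have "continuous_on (?K i) (\<lambda>z. Du i z $ g0)"
      by (rule continuous_on_compose2[of UNIV "\<lambda>v. v $ g0", OF _ cDu[OF i]])
        (auto intro: continuous_intros)
    moreover have "?K i \<noteq> {}" using x0 i by blast
    ultimately obtain z0 where z0: "z0 \<in> ?K i" "\<forall>z\<in>?K i. Du i z0 $ g0 \<le> Du i z $ g0"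
      using continuous_attains_inf[OF cK[OF i]] by blast
    have "0 < Du i z0 $ g0" using ua i z0(1) KX unfolding utility_assms_def by blast
    then show "\<exists>c>0. \<forall>z\<in>?K i. c \<le> Du i z $ g0" using z0 by blast
  qed
  from fin_lower[of "{1..m}" "\<lambda>i. ?K i" "\<lambda>i z. Du i z $ g0", OF _ this]
  obtain c where c: "c > 0" "\<forall>i\<in>{1..m}. \<forall>z\<in>?K i. c \<le> Du i z $ g0"
    by auto
  have "\<forall>i\<in>{1..m}. \<exists>M. \<forall>z\<in>?K i. (\<Sum>a\<in>UNIV. \<Sum>b\<in>UNIV. \<bar>H i z $ a $ b\<bar>) \<le> M"
  proof
    fix i assume i: "i \<in> {1..m}"
    obtain N where N: "\<forall>z\<in>?K i. norm (H i z) \<le> N" using cont_bounded_norm[OF cK[OF i] cH[OF i]] by blast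
    have "(\<Sum>a\<in>UNIV. \<Sum>b\<in>UNIV. \<bar>H i z $ a $ b\<bar>) \<le> (\<Sum>a\<in>(UNIV::'g set). \<Sum>b\<in>(UNIV::'g set). N)"
      if z: "z \<in> ?K i" for z
    proof (intro sum_mono)
      fix a b :: 'g
      have "\<bar>H i z $ a $ b\<bar> \<le> norm (H i z $ a)" by (rule component_le_norm_cart)
      also have "\<dots> \<le> norm (H i z)" by (rule Finite_Cartesian_Product.norm_nth_le)
      also have "\<dots> \<le> N" using N z by blast
      finally show "\<bar>H i z $ a $ b\<bar> \<le> N" .
    qed
    then show "\<exists>M. \<forall>z\<in>?K i. (\<Sum>a\<in>UNIV. \<Sum>b\<in>UNIV. \<bar>H i z $ a $ b\<bar>) \<le> M" by blast
  qed
  from fin_upper[of "{1..m}" "\<lambda>i. ?K i" "\<lambda>i z. (\<Sum>a\<in>UNIV. \<Sum>b\<in>UNIV. \<bar>H i z $ a $ b\<bar>)", OF _ this]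
  obtain M where M: "M \<ge> 0" "\<forall>i\<in>{1..m}. \<forall>z\<in>?K i. (\<Sum>a\<in>UNIV. \<Sum>b\<in>UNIV. \<bar>H i z $ a $ b\<bar>) \<le> M"
    by auto
  have "\<forall>i\<in>{1..m}. \<exists>P. \<forall>z\<in>?K i. norm (Du i z) \<le> P"
  proof
    fix i assume i: "i \<in> {1..m}"
    show "\<exists>P. \<forall>z\<in>?K i. norm (Du i z) \<le> P" using cont_bounded_norm[OF cK[OF i] cDu[OF i]] .
  qed
  from fin_upper[of "{1..m}" "\<lambda>i. ?K i" "\<lambda>i z. norm (Du i z)", OF _ this]
  obtain N where N: "N \<ge> 0" "\<forall>i\<in>{1..m}. \<forall>z\<in>?K i. norm (Du i z) \<le> N"
    by auto
  have P: "\<forall>i\<in>{1..m}. \<forall>z\<in>?K i. \<forall>j. thr g0 (Du i) z j \<le> N / c"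
  proof (intro ballI allI)
    fix i z j assume i: "i \<in> {1..m}" and z: "z \<in> ?K i"
    have "\<bar>Du i z $ j\<bar> \<le> norm (Du i z)" by (rule component_le_norm_cart)
    moreover have "norm (Du i z) \<le> N" using N i z by blast
    ultimately have "Du i z $ j \<le> N" by linarith
    moreover have "c \<le> Du i z $ g0" using c i z by blast
    moreover have "0 < Du i z $ j" using ua i z KX unfolding utility_assms_def by blast
    ultimately show "thr g0 (Du i) z j \<le> N / c"
      unfolding thr_def using c(1) by (intro frac_le) auto
  qed
  have "\<forall>i\<in>{1..m}. \<exists>U. \<forall>z\<in>?K i. u i z \<le> U"
  proof
    fix i assume i: "i \<in> {1..m}"
    obtain N where "\<forall>z\<in>?K i. norm (u i z) \<le> N" using cont_bounded_norm[OF cK[OF i] cu[OF i]] by blast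
    then have "\<forall>z\<in>?K i. u i z \<le> N" by (auto simp: abs_le_iff)
    then show "\<exists>U. \<forall>z\<in>?K i. u i z \<le> U" by blast
  qed
  from fin_upper[of "{1..m}" "\<lambda>i. ?K i" "\<lambda>i z. u i z", OF _ this]
  obtain U where U: "\<forall>i\<in>{1..m}. \<forall>z\<in>?K i. u i z \<le> U"
    by auto
  show ?thesis using c M P U by blast
qed


lemma Kset_inv:
  fixes s :: "nat \<Rightarrow> nat \<Rightarrow> real^'g::finite"
  assumes ua: "\<forall>i\<in>{1..m}. utility_assms pos_orthant (u i) (Du i) (H i)"
    and s0: "\<forall>i\<in>{1..m}. s 0 i \<in> pos_orthant"
    and st: "\<forall>k. (trade_step pos_orthant u Du g0 m (dl k) (s k) (s (Suc k)) \<and> (\<forall>i\<in>{1..m}. \<forall>j. j \<noteq> g0 \<longrightarrow> 0 < dl k i j))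
                 \<or> s (Suc k) = s k"
  shows "(\<forall>i\<in>{1..m}. s k i \<in> Kset (u i) (s 0 i) (\<Sum>l\<in>{1..m}. s 0 l)) \<and> (\<Sum>l\<in>{1..m}. s k l) = (\<Sum>l\<in>{1..m}. s 0 l)"
proof (induction k)
  case 0
  have "s 0 i \<in> Kset (u i) (s 0 i) (\<Sum>l\<in>{1..m}. s 0 l)" if i: "i \<in> {1..m}" for i
    using s0 i box_from_sum[of "{1..m}" i "s 0" "\<Sum>l\<in>{1..m}. s 0 l"] by (auto simp: Kset_def)
  then show ?case by simp
next
  case (Suc k)
  show ?case
  proof (cases "s (Suc k) = s k")
    case True then show ?thesis using Suc by simp
  next
    case False
    then have st': "trade_step pos_orthant u Du g0 m (dl k) (s k) (s (Suc k))"
      and dp: "\<forall>i\<in>{1..m}. \<forall>j. j \<noteq> g0 \<longrightarrow> 0 < dl k i j" using st by auto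
    have sX: "\<forall>i\<in>{1..m}. s k i \<in> pos_orthant" using Suc Kset_sub by blast
    note tb = trade_basic[OF ua sX dp st']
    have sum: "(\<Sum>l\<in>{1..m}. s (Suc k) l) = (\<Sum>l\<in>{1..m}. s 0 l)" using tb(2) Suc by simp
    have "s (Suc k) i \<in> Kset (u i) (s 0 i) (\<Sum>l\<in>{1..m}. s 0 l)" if i: "i \<in> {1..m}" for i
    proof -
      have "s (Suc k) i \<in> pos_orthant" "u i (s k i) \<le> u i (s (Suc k) i)" using tb(1) i by auto
      moreover have "u i (s 0 i) \<le> u i (s k i)" using Suc i by (auto simp: Kset_def)
      moreover have "\<forall>kk. s (Suc k) i $ kk \<le> (\<Sum>l\<in>{1..m}. s 0 l) $ kk"
        using box_from_sum[of "{1..m}" i "s (Suc k)" "\<Sum>l\<in>{1..m}. s 0 l"] tb(1) i sum by auto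
      ultimately show ?thesis by (auto simp: Kset_def)
    qed
    then show ?thesis using sum by simp
  qed
qed

lemma partA:
  fixes s :: "nat \<Rightarrow> nat \<Rightarrow> real^'g::finite"
  assumes ua: "\<forall>i\<in>{1..m}. utility_assms pos_orthant (u i) (Du i) (H i)"
    and s0: "\<forall>i\<in>{1..m}. s 0 i \<in> pos_orthant"
    and dp: "\<forall>i\<in>{1..m}. \<forall>j. j \<noteq> g0 \<longrightarrow> 0 < \<delta> i j"
    and st: "\<forall>k. trade_step pos_orthant u Du g0 m \<delta> (s k) (s (Suc k))"
  shows False
proof -
  define T where "T = (\<Sum>l\<in>{1..m}. s 0 l)"
  define K where "K i = Kset (u i) (s 0 i) T" for i
  have inv: "(\<forall>i\<in>{1..m}. s k i \<in> K i) \<and> (\<Sum>l\<in>{1..m}. s k l) = T" for k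
    unfolding K_def T_def by (rule Kset_inv[of m u Du H s g0 "\<lambda>_. \<delta>"]) (use ua s0 st dp in auto)
  obtain c M P U where c: "0 < c" "\<forall>i\<in>{1..m}. \<forall>z\<in>K i. c \<le> Du i z $ g0"
    and M: "0 \<le> M" "\<forall>i\<in>{1..m}. \<forall>z\<in>K i. (\<Sum>a\<in>UNIV. \<Sum>b\<in>UNIV. \<bar>H i z $ a $ b\<bar>) \<le> M"
    and P: "\<forall>i\<in>{1..m}. \<forall>z\<in>K i. \<forall>j. thr g0 (Du i) z j \<le> P"
    and U: "\<forall>i\<in>{1..m}. \<forall>z\<in>K i. u i z \<le> U"
    using constants_exist[of m u Du H "s 0" T g0] ua inv[of 0] unfolding K_def by auto
  have "\<forall>i\<in>{1..m}. \<exists>c>0. \<forall>j\<in>{j. j \<noteq> g0}. c \<le> \<delta> i j"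
    using dp fin_lower0[of "{j. j \<noteq> g0}"] by auto
  from fin_lower[of "{1..m}" "\<lambda>i. {j. j \<noteq> g0}" \<delta>, OF _ this]
  obtain d0 where d0: "0 < d0" "\<forall>i\<in>{1..m}. \<forall>j. j \<noteq> g0 \<longrightarrow> d0 \<le> \<delta> i j" by auto
  define \<gamma> where "\<gamma> = (c * d0) ^ 2 / (4 * (M * (P ^ 2 + 1) + 1))"
  have \<gamma>: "0 < \<gamma>" unfolding \<gamma>_def using c d0 M by (simp add: add_nonneg_pos)
  have KC: "\<forall>i\<in>{1..m}. convex (K i) \<and> K i \<subseteq> pos_orthant"
    using Kset_convex[of "u _" "Du _" "H _"] Kset_sub ua unfolding K_def by blast
  have step: "(\<Sum>i\<in>{1..m}. u i (s k i)) + \<gamma> \<le> (\<Sum>i\<in>{1..m}. u i (s (Suc k) i))" for k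
  proof (rule sum_gain)
    have sX: "\<forall>i\<in>{1..m}. s k i \<in> pos_orthant" using inv[of k] KC by blast
    show "\<forall>l\<in>{1..m}. u l (s k l) \<le> u l (s (Suc k) l)" using trade_basic(1)[OF ua sX dp st[rule_format]] by blast
    show "\<exists>i\<in>{1..m}. u i (s k i) + \<gamma> \<le> u i (s (Suc k) i)"
      unfolding \<gamma>_def
      by (rule trade_gain[OF ua KC _ _ c M P d0 st[rule_format]]) (use inv in auto)
  qed simp
  have grow: "(\<Sum>i\<in>{1..m}. u i (s 0 i)) + real k * \<gamma> \<le> (\<Sum>i\<in>{1..m}. u i (s k i))" for k
  proof (induction k)
    case 0 then show ?case by simp
  next
    case (Suc k) then show ?case using step[of k] by (simp add: distrib_right)
  qed
  have bnd: "(\<Sum>i\<in>{1..m}. u i (s k i)) \<le> (\<Sum>i\<in>{1..m}. U)" for k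
    by (rule sum_mono) (use inv U in blast)
  obtain k where "(\<Sum>i\<in>{1..m}. U) - (\<Sum>i\<in>{1..m}. u i (s 0 i)) < real k * \<gamma>"
    using reals_Archimedean3[OF \<gamma>] by blast
  then show False using grow[of k] bnd[of k] by linarith
qed


lemma joint_subseq:
  fixes f :: "nat \<Rightarrow> nat \<Rightarrow> real^'g::finite"
  assumes "finite A" "\<forall>i\<in>A. compact (C i)" "\<forall>i\<in>A. \<forall>n. f n i \<in> C i"
  shows "\<exists>r l. strict_mono r \<and> (\<forall>i\<in>A. l i \<in> C i \<and> ((\<lambda>n. f (r n) i) \<longlonglongrightarrow> l i))"
  using assms
proof (induction A rule: finite_induct)
  case empty
  show ?case by (intro exI[of _ id]) (auto simp: strict_mono_def)
next
  case (insert x F)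
  then obtain r l where r: "strict_mono r" "\<forall>i\<in>F. l i \<in> C i \<and> ((\<lambda>n. f (r n) i) \<longlonglongrightarrow> l i)" by auto
  have "seq_compact (C x)" using insert by (auto intro: compact_imp_seq_compact)
  moreover have "\<forall>n. f (r n) x \<in> C x" using insert by auto
  ultimately obtain lx r2 where r2: "lx \<in> C x" "strict_mono r2" "((\<lambda>n. f (r n) x) \<circ> r2) \<longlonglongrightarrow> lx"
    by (rule seq_compactE)
  have sm: "strict_mono (r \<circ> r2)" using r r2 by (intro strict_mono_o)
  have "\<forall>i\<in>insert x F. (l(x := lx)) i \<in> C i \<and> ((\<lambda>n. f ((r \<circ> r2) n) i) \<longlonglongrightarrow> (l(x := lx)) i)"
  proof
    fix i assume i: "i \<in> insert x F"
    show "(l(x := lx)) i \<in> C i \<and> ((\<lambda>n. f ((r \<circ> r2) n) i) \<longlonglongrightarrow> (l(x := lx)) i)"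
    proof (cases "i = x")
      case True then show ?thesis using r2 by (simp add: o_def)
    next
      case False
      then have "i \<in> F" using i by auto
      then have "(\<lambda>n. f (r n) i) \<longlonglongrightarrow> l i" "l i \<in> C i" using r by auto
      from LIMSEQ_subseq_LIMSEQ[OF this(1) r2(2)] show ?thesis using False \<open>l i \<in> C i\<close> by (simp add: o_def)
    qed
  qed
  then show ?case using sm by blast
qed

lemma thr_tendsto:
  assumes ua: "utility_assms pos_orthant u Du H" and z: "z \<in> pos_orthant" and f: "(f \<longlongrightarrow> z) F"
  shows "((\<lambda>n. thr g0 Du (f n) j) \<longlongrightarrow> thr g0 Du z j) F"
proof -
  have "isCont Du z" using ua z unfolding utility_assms_def by (metis has_derivative_continuous)
  then have "((\<lambda>n. Du (f n)) \<longlongrightarrow> Du z) F" using f by (rule isCont_tendsto_compose)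
  moreover have "Du z $ g0 \<noteq> 0" using ua z unfolding utility_assms_def by (metis less_irrefl)
  ultimately have "((\<lambda>n. Du (f n) $ j / Du (f n) $ g0) \<longlongrightarrow> Du z $ j / Du z $ g0) F"
    by (intro tendsto_divide tendsto_vec_nth) auto
  then show ?thesis by (simp add: thr_def)
qed

definition budget :: "'g \<Rightarrow> ('g \<Rightarrow> real) \<Rightarrow> real^'g::finite \<Rightarrow> real" where
  "budget g0 p x = x $ g0 + (\<Sum>j\<in>UNIV - {g0}. p j * x $ j)"

lemma budget_add: "budget g0 p (x + y) = budget g0 p x + budget g0 p y"
  by (simp add: budget_def distrib_left sum.distrib)

lemma budget_scale: "budget g0 p (c *\<^sub>R x) = c * budget g0 p x"
  by (simp add: budget_def sum_distrib_left distrib_left algebra_simps)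

lemma budget_sum: "finite A \<Longrightarrow> budget g0 p (\<Sum>i\<in>A. f i) = (\<Sum>i\<in>A. budget g0 p (f i))"
  by (induction A rule: finite_induct) (auto simp: budget_add, simp add: budget_def)

lemma inner_budget:
  fixes v h :: "real^'g::finite"
  assumes "0 < v $ g0" "\<forall>j. j \<noteq> g0 \<longrightarrow> v $ j / v $ g0 = p j"
  shows "v \<bullet> h = v $ g0 * budget g0 p h"
proof -
  have "v \<bullet> h = (\<Sum>k\<in>UNIV. v $ k * h $ k)" by (simp add: inner_vec_def)
  also have "\<dots> = v $ g0 * h $ g0 + (\<Sum>k\<in>UNIV - {g0}. v $ k * h $ k)"
    by (simp add: sum.remove[of UNIV g0])
  also have "(\<Sum>k\<in>UNIV - {g0}. v $ k * h $ k) = (\<Sum>k\<in>UNIV - {g0}. v $ g0 * (p k * h $ k))"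
  proof (intro sum.cong refl)
    fix k assume "k \<in> UNIV - {g0}"
    then have "v $ k = v $ g0 * p k" using assms by (auto simp: field_simps)
    then show "v $ k * h $ k = v $ g0 * (p k * h $ k)" by simp
  qed
  finally show ?thesis by (simp add: budget_def distrib_left sum_distrib_left)
qed

lemma grad_budget:
  assumes ua: "utility_assms pos_orthant u Du H" and z: "z \<in> pos_orthant" and x: "x \<in> pos_orthant"
    and p: "\<forall>j. j \<noteq> g0 \<longrightarrow> thr g0 Du z j = p j"
  shows "u x \<le> u z + Du z $ g0 * (budget g0 p x - budget g0 p z)" "0 < Du z $ g0"
proof -
  show pos: "0 < Du z $ g0" using ua z unfolding utility_assms_def by blast
  have "u x \<le> u z + Du z \<bullet> (x - z)" by (rule ua_grad[OF ua z x])
  also have "Du z \<bullet> (x - z) = Du z $ g0 * budget g0 p (x - z)"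
    by (rule inner_budget) (use pos p in \<open>auto simp: thr_def\<close>)
  also have "budget g0 p (x - z) = budget g0 p x - budget g0 p z"
    using budget_add[of g0 p "x - z" z] by simp
  finally show "u x \<le> u z + Du z $ g0 * (budget g0 p x - budget g0 p z)" .
qed

lemma eq_opt:
  assumes ua: "utility_assms pos_orthant u Du H" and z: "z \<in> pos_orthant"
    and p: "\<forall>j. j \<noteq> g0 \<longrightarrow> thr g0 Du z j = p j"
  shows "\<forall>x\<in>pos_orthant. x $ g0 + (\<Sum>j\<in>UNIV - {g0}. p j * x $ j)
                 = z $ g0 + (\<Sum>j\<in>UNIV - {g0}. p j * z $ j) \<longrightarrow> u x \<le> u z"
proof (intro ballI impI)
  fix x assume x: "x \<in> pos_orthant" and b: "x $ g0 + (\<Sum>j\<in>UNIV - {g0}. p j * x $ j) = z $ g0 + (\<Sum>j\<in>UNIV - {g0}. p j * z $ j)"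
  then have "budget g0 p x = budget g0 p z" by (simp add: budget_def)
  then show "u x \<le> u z" using grad_budget(1)[OF ua z x p] by simp
qed

lemma seg_ge:
  assumes ua: "utility_assms pos_orthant u Du H" and z: "z \<in> pos_orthant" and w: "w \<in> pos_orthant"
    and uw: "u z \<le> u w" and l: "0 \<le> l" "l \<le> 1"
  shows "z + l *\<^sub>R (w - z) \<in> pos_orthant" "u z \<le> u (z + l *\<^sub>R (w - z))"
proof -
  have eq: "z + l *\<^sub>R (w - z) = (1 - l) *\<^sub>R z + l *\<^sub>R w" by (simp add: algebra_simps)
  show "z + l *\<^sub>R (w - z) \<in> pos_orthant"
    unfolding eq using convex_pos z w l unfolding convex_def by (metis diff_ge_0_iff_ge diff_add_cancel add.commute)
  have "u ((1 - l) *\<^sub>R z + l *\<^sub>R w) \<ge> (1 - l) * u z + l * u w"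
    by (rule concave_onD[OF ua_concave[OF ua] l z w])
  moreover have "l * u z \<le> l * u w" using l uw by (intro mult_left_mono) auto
  ultimately show "u z \<le> u (z + l *\<^sub>R (w - z))" unfolding eq by (simp add: algebra_simps)
qed

lemma strict_mid:
  fixes z w :: "real^'g::finite"
  assumes ua: "utility_assms pos_orthant u Du H" and z: "z \<in> pos_orthant" and w: "w \<in> pos_orthant"
    and ne: "w \<noteq> z" and uw: "u w = u z"
  shows "u z < u (z + (1/2) *\<^sub>R (w - z))"
proof (rule ccontr)
  assume nt: "\<not> ?thesis"
  define h where "h = w - z"
  define v where "v = z + (1/2) *\<^sub>R h"
  have h0: "h \<noteq> 0" using ne by (simp add: h_def)
  have v: "v \<in> pos_orthant" "u z \<le> u v" using seg_ge[OF ua z w _, of "1/2"] uw by (auto simp: v_def h_def)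
  have uv: "u v = u z" using v nt by (simp add: v_def h_def)
  have g1: "u z \<le> u v + Du v \<bullet> (z - v)" by (rule ua_grad[OF ua v(1) z])
  have g2: "u w \<le> u v + Du v \<bullet> (w - v)" by (rule ua_grad[OF ua v(1) w])
  have "z - v = - ((1/2) *\<^sub>R h)" "w - v = (1/2) *\<^sub>R h" by (simp_all add: vec_eq_iff v_def h_def field_simps)
  then have Dh: "Du v \<bullet> h = 0" using g1 g2 uv uw by (simp add: inner_minus_right) 
  have neg: "h \<bullet> (H v *v h) < 0" using ua v(1) h0 Dh unfolding utility_assms_def by blast
  define \<phi> where "\<phi> s = Du (v + s *\<^sub>R h) \<bullet> h" for s
  have "((\<lambda>\<xi>. v + \<xi> *\<^sub>R h) has_derivative (\<lambda>\<xi>. \<xi> *\<^sub>R h)) (at 0)"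
    by (auto intro!: derivative_eq_intros)
  moreover have "(Du has_derivative (\<lambda>k. H v *v k)) (at (v + 0 *\<^sub>R h))"
    using ua_deriv2[OF ua v(1)] by simp
  ultimately have "((\<lambda>\<xi>. Du (v + \<xi> *\<^sub>R h)) has_derivative (\<lambda>r. H v *v (r *\<^sub>R h))) (at 0)"
    by (rule has_derivative_compose)
  from bounded_linear.has_derivative[OF bounded_linear_inner_left this, of h]
  have "(\<phi> has_derivative (\<lambda>r. (H v *v (r *\<^sub>R h)) \<bullet> h)) (at 0)" unfolding \<phi>_def[abs_def] .
  moreover have "(\<lambda>r. (H v *v (r *\<^sub>R h)) \<bullet> h) = (*) ((H v *v h) \<bullet> h)"
    by (rule ext) (simp add: matrix_vector_mult_scaleR)
  ultimately have "(\<phi> has_real_derivative ((H v *v h) \<bullet> h)) (at 0)"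
    unfolding has_field_derivative_def by simp
  moreover have "(H v *v h) \<bullet> h < 0" using neg by (simp add: inner_commute)
  ultimately obtain d where d: "d > 0" "\<forall>k>0. k < d \<longrightarrow> \<phi> (0 + k) < \<phi> 0"
    using DERIV_neg_dec_right by blast
  have \<phi>0: "\<phi> 0 = 0" using Dh by (simp add: \<phi>_def)
  define t where "t = min d (1/2) / 2"
  have t: "0 < t" "t < d" "t \<le> 1/2" using d by (auto simp: t_def)
  have inseg: "v + s *\<^sub>R h \<in> pos_orthant \<and> u z \<le> u (v + s *\<^sub>R h)" if "0 \<le> s" "s \<le> 1/2" for s
  proof -
    have "v + s *\<^sub>R h = z + (1/2 + s) *\<^sub>R (w - z)" by (simp add: v_def h_def algebra_simps)
    then show ?thesis using seg_ge[OF ua z w _, of "1/2 + s"] uw that by auto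
  qed
  have der: "((\<lambda>s. u (v + s *\<^sub>R h)) has_derivative (*) (Du (v + s *\<^sub>R h) \<bullet> h)) (at s within {0..t})"
    if "0 \<le> s" "s \<le> t" for s
  proof -
    have "v + s *\<^sub>R h \<in> pos_orthant" using inseg[of s] that t by auto
    from line_deriv[OF ua this] show ?thesis
      unfolding has_field_derivative_def by (rule has_derivative_at_withinI)
  qed
  obtain \<zeta> where \<zeta>: "\<zeta> \<in> {0<..<t}" and eq: "u (v + t *\<^sub>R h) - u (v + 0 *\<^sub>R h) = Du (v + \<zeta> *\<^sub>R h) \<bullet> h * (t - 0)"
    using mvt_simple[OF t(1) der] by blast
  have "\<phi> \<zeta> < 0" using d(2) \<zeta> t \<phi>0 by auto
  then have "Du (v + \<zeta> *\<^sub>R h) \<bullet> h * t < 0" using t(1) by (simp add: \<phi>_def mult_neg_pos)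
  then have "u (v + t *\<^sub>R h) < u v" using eq by simp
  moreover have "u z \<le> u (v + t *\<^sub>R h)" using inseg[of t] t by auto
  ultimately show False using uv by simp
qed

lemma unique_alloc:
  fixes z w :: "nat \<Rightarrow> real^'g::finite"
  assumes ua: "\<forall>i\<in>A. utility_assms pos_orthant (u i) (Du i) (H i)" and fin: "finite A"
    and z: "\<forall>i\<in>A. z i \<in> pos_orthant" and w: "\<forall>i\<in>A. w i \<in> pos_orthant"
    and p: "\<forall>i\<in>A. \<forall>j. j \<noteq> g0 \<longrightarrow> thr g0 (Du i) (z i) j = p j"
    and uw: "\<forall>i\<in>A. u i (w i) = u i (z i)"
    and sw: "(\<Sum>i\<in>A. w i) = (\<Sum>i\<in>A. z i)"
  shows "\<forall>i\<in>A. w i = z i"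
proof (rule ccontr)
  assume "\<not> ?thesis"
  then obtain i0 where i0: "i0 \<in> A" "w i0 \<noteq> z i0" by auto
  define v where "v i = z i + (1/2) *\<^sub>R (w i - z i)" for i
  have vge: "budget g0 p (z i) \<le> budget g0 p (v i)" if i: "i \<in> A" for i
  proof -
    have ui: "utility_assms pos_orthant (u i) (Du i) (H i)" using ua i by auto
    have sg: "v i \<in> pos_orthant" "u i (z i) \<le> u i (v i)"
      using seg_ge[OF ui, of "z i" "w i" "1/2"] z w uw i by (auto simp: v_def)
    have zi: "z i \<in> pos_orthant" and pi: "\<forall>j. j \<noteq> g0 \<longrightarrow> thr g0 (Du i) (z i) j = p j" using z p i by auto
    from grad_budget[OF ui zi sg(1) pi]
    have "u i (v i) \<le> u i (z i) + Du i (z i) $ g0 * (budget g0 p (v i) - budget g0 p (z i))" "0 < Du i (z i) $ g0"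
      by auto
    then have "0 \<le> Du i (z i) $ g0 * (budget g0 p (v i) - budget g0 p (z i))" using sg by linarith
    then show ?thesis using \<open>0 < Du i (z i) $ g0\<close> by (simp add: zero_le_mult_iff)
  qed
  have vgt: "budget g0 p (z i0) < budget g0 p (v i0)"
  proof -
    have ui: "utility_assms pos_orthant (u i0) (Du i0) (H i0)" using ua i0 by auto
    have sg: "v i0 \<in> pos_orthant" using seg_ge[OF ui, of "z i0" "w i0" "1/2"] z w uw i0 by (auto simp: v_def)
    have st: "u i0 (z i0) < u i0 (v i0)"
      unfolding v_def by (rule strict_mid[OF ui]) (use z w uw i0 in auto)
    have zi: "z i0 \<in> pos_orthant" and pi: "\<forall>j. j \<noteq> g0 \<longrightarrow> thr g0 (Du i0) (z i0) j = p j" using z p i0 by auto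
    from grad_budget[OF ui zi sg pi]
    have "u i0 (v i0) \<le> u i0 (z i0) + Du i0 (z i0) $ g0 * (budget g0 p (v i0) - budget g0 p (z i0))" "0 < Du i0 (z i0) $ g0"
      by auto
    then have "0 < Du i0 (z i0) $ g0 * (budget g0 p (v i0) - budget g0 p (z i0))" using st by linarith
    then show ?thesis using \<open>0 < Du i0 (z i0) $ g0\<close> by (simp add: zero_less_mult_iff)
  qed
  have "(\<Sum>i\<in>A. budget g0 p (z i)) < (\<Sum>i\<in>A. budget g0 p (v i))"
    by (rule sum_strict_mono_ex1[OF fin]) (use vge vgt i0 in auto)
  moreover have "(\<Sum>i\<in>A. v i) = (\<Sum>i\<in>A. z i)"
  proof -
    have "(\<Sum>i\<in>A. v i) = (\<Sum>i\<in>A. z i) + (1/2) *\<^sub>R ((\<Sum>i\<in>A. w i) - (\<Sum>i\<in>A. z i))"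
      by (simp add: v_def sum.distrib sum_subtractf[symmetric] scaleR_sum_right)
    then show ?thesis using sw by simp
  qed
  then have "(\<Sum>i\<in>A. budget g0 p (v i)) = (\<Sum>i\<in>A. budget g0 p (z i))"
    using budget_sum[OF fin, of g0 p v] budget_sum[OF fin, of g0 p z] by simp
  ultimately show False by simp
qed


lemma noavail_thr:
  assumes na: "\<not> trade_available X u Du g0 m \<delta> s"
    and i: "i1 \<in> {1..m}" "i2 \<in> {1..m}" "j \<noteq> g0" "0 < s i1 $ j"
  shows "thr g0 (Du i2) (s i2) j - \<delta> i2 j < thr g0 (Du i1) (s i1) j + \<delta> i1 j"
proof (rule ccontr)
  assume "\<not> ?thesis"
  then have le: "thr g0 (Du i1) (s i1) j + \<delta> i1 j \<le> thr g0 (Du i2) (s i2) j - \<delta> i2 j" by simp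
  define \<pi> where "\<pi> = thr g0 (Du i1) (s i1) j + \<delta> i1 j"
  define s' where "s' = (let \<xi> = min (xi_plus X (u i1) g0 j (s i1) \<pi>) (xi_minus X (u i2) g0 j (s i2) \<pi>)
         in s(i1 := s i1 + \<xi> *\<^sub>R dirv g0 j \<pi>, i2 := s i2 - \<xi> *\<^sub>R dirv g0 j \<pi>))"
  have "trade_step X u Du g0 m \<delta> s s'"
    unfolding trade_step_def
    by (rule exI[of _ i1], rule exI[of _ i2], rule exI[of _ j], rule exI[of _ \<pi>])
      (use i le in \<open>simp add: \<pi>_def s'_def Let_def\<close>)
  then show False using na unfolding trade_available_def by blast
qed

lemma partB:
  fixes u :: "nat \<Rightarrow> real ^ 'g::finite \<Rightarrow> real"
    and Du :: "nat \<Rightarrow> real ^ 'g \<Rightarrow> real ^ 'g"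
    and H :: "nat \<Rightarrow> real ^ 'g \<Rightarrow> real ^ 'g ^ 'g"
    and g0 :: 'g and m :: nat
    and x0 :: "nat \<Rightarrow> real ^ 'g"
  assumes ua: "\<forall>i\<in>{1..m}. utility_assms pos_orthant (u i) (Du i) (H i)"
    and init: "\<forall>i\<in>{1..m}. x0 i \<in> pos_orthant"
    and dpos: "\<forall>k. \<forall>i\<in>{1..m}. \<forall>j. j \<noteq> g0 \<longrightarrow> 0 < \<delta> k i j"
    and dmono: "\<forall>k. \<forall>i\<in>{1..m}. \<forall>j. j \<noteq> g0 \<longrightarrow> \<delta> (Suc k) i j \<le> \<delta> k i j"
    and dlim: "\<forall>i\<in>{1..m}. \<forall>j. j \<noteq> g0 \<longrightarrow> (\<lambda>k. \<delta> k i j) \<longlonglongrightarrow> 0"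
    and y0: "y 0 = x0" and stage0: "stage 0 = (0::nat)"
    and proc: "\<forall>t. (trade_step pos_orthant u Du g0 m (\<delta> (stage t)) (y t) (y (Suc t))
                \<and> stage (Suc t) = stage t)
           \<or> (\<not> trade_available pos_orthant u Du g0 m (\<delta> (stage t)) (y t)
                \<and> y (Suc t) = y t \<and> stage (Suc t) = Suc (stage t))"
  shows "\<exists>xbar pbar.
             (\<forall>i\<in>{1..m}. (\<lambda>t. y t i) \<longlonglongrightarrow> xbar i \<and>
                (\<forall>j. j \<noteq> g0 \<longrightarrow>
                   (\<lambda>t. thr g0 (Du i) (y t i) j) \<longlonglongrightarrow> pbar j \<and>
                   thr g0 (Du i) (xbar i) j = pbar j)) \<and>
             equilibrium pos_orthant u g0 m x0 xbar pbar"
proof -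
  let ?X = "pos_orthant :: (real^'g) set"
  define T where "T = (\<Sum>l\<in>{1..m}. x0 l)"
  define K where "K i = Kset (u i) (x0 i) T" for i
  have inv: "(\<forall>i\<in>{1..m}. y t i \<in> K i) \<and> (\<Sum>l\<in>{1..m}. y t l) = T" for t
  proof -
    have "(\<forall>i\<in>{1..m}. y t i \<in> Kset (u i) (y 0 i) (\<Sum>l\<in>{1..m}. y 0 l)) \<and> (\<Sum>l\<in>{1..m}. y t l) = (\<Sum>l\<in>{1..m}. y 0 l)"
      by (rule Kset_inv[of m u Du H y g0 "\<lambda>t. \<delta> (stage t)"]) (use ua init y0 proc dpos in auto)
    then show ?thesis by (simp add: K_def T_def y0)
  qed
  have KX: "K i \<subseteq> ?X" for i unfolding K_def by (rule Kset_sub)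
  have yX: "y t i \<in> ?X" if "i \<in> {1..m}" for t i using inv[of t] KX that by blast
  have cK: "compact (K i)" if "i \<in> {1..m}" for i
    unfolding K_def by (rule Kset_compact[of "u i" "Du i" "H i"]) (use ua init that in auto)
  obtain c M P U where U: "\<forall>i\<in>{1..m}. \<forall>z\<in>K i. u i z \<le> U"
    using constants_exist[of m u Du H x0 T g0] ua inv[of 0] y0 unfolding K_def by auto
  have smono1: "stage t \<le> stage (Suc t)" for t
  proof -
    from proc[rule_format, of t] show ?thesis by auto
  qed
  have smono: "t1 \<le> t2 \<Longrightarrow> stage t1 \<le> stage t2" for t1 t2 by (rule lift_Suc_mono_le[of stage, OF smono1])
  have sle: "stage t \<le> t" for t
  proof (induction t)
    case 0 then show ?case using stage0 by simp
  next
    case (Suc t) then show ?case using proc[rule_format, of t] by auto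
  qed
  have dmono': "k1 \<le> k2 \<Longrightarrow> \<delta> k2 i j \<le> \<delta> k1 i j" if "i \<in> {1..m}" "j \<noteq> g0" for k1 k2 i j
    by (rule lift_Suc_antimono_le[of "\<lambda>k. \<delta> k i j"]) (use dmono that in auto)
  define bump where "bump t \<longleftrightarrow> \<not> trade_available pos_orthant u Du g0 m (\<delta> (stage t)) (y t)" for t
  have bump_stage: "bump t \<Longrightarrow> stage (Suc t) = Suc (stage t)" for t
    using proc[rule_format, of t] unfolding bump_def trade_available_def by blast
  have inf: "\<exists>t\<ge>t0. bump t" for t0
  proof (rule ccontr)
    assume "\<not> (\<exists>t\<ge>t0. bump t)"
    then have tr: "\<And>t. t \<ge> t0 \<Longrightarrow> trade_step pos_orthant u Du g0 m (\<delta> (stage t)) (y t) (y (Suc t)) \<and> stage (Suc t) = stage t"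
      using proc unfolding bump_def by blast
    have sc: "stage (t0 + n) = stage t0" for n
      by (induction n) (use tr in auto)
    show False
    proof (rule partA[of m u Du H "\<lambda>n. y (t0 + n)" g0 "\<delta> (stage t0)"])
      show "\<forall>i\<in>{1..m}. utility_assms pos_orthant (u i) (Du i) (H i)" by (rule ua)
      show "\<forall>i\<in>{1..m}. y (t0 + 0) i \<in> pos_orthant" using yX by auto
      show "\<forall>i\<in>{1..m}. \<forall>j. j \<noteq> g0 \<longrightarrow> 0 < \<delta> (stage t0) i j" using dpos by auto
      show "\<forall>k. trade_step pos_orthant u Du g0 m (\<delta> (stage t0)) (y (t0 + k)) (y (t0 + Suc k))"
      proof
        fix k
        have "trade_step pos_orthant u Du g0 m (\<delta> (stage (t0 + k))) (y (t0 + k)) (y (Suc (t0 + k)))"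
          using tr[of "t0 + k"] by simp
        then show "trade_step pos_orthant u Du g0 m (\<delta> (stage t0)) (y (t0 + k)) (y (t0 + Suc k))"
          using sc[of k] by simp
      qed
    qed
  qed
  have ek: "\<exists>t. bump t \<and> k \<le> stage t" for k
  proof (induction k)
    case 0 then show ?case using inf[of 0] by blast
  next
    case (Suc k)
    then obtain t where t: "bump t" "k \<le> stage t" by blast
    obtain t' where t': "t' \<ge> Suc t" "bump t'" using inf[of "Suc t"] by blast
    have "stage (Suc t) \<le> stage t'" using t' smono by blast
    then show ?case using t t' bump_stage[OF t(1)] by (intro exI[of _ t']) auto
  qed
  then have "\<forall>k. \<exists>t. bump t \<and> k \<le> stage t" by blast
  from choice[OF this] obtain e where e0: "\<forall>k. bump (e k) \<and> k \<le> stage (e k)" by blast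
  then have e: "\<And>k. bump (e k)" "\<And>k. k \<le> stage (e k)" by auto
  have ege: "k \<le> e k" for k using e(2)[of k] sle[of "e k"] by linarith
  have uinc: "u i (y t i) \<le> u i (y (Suc t) i)" if i: "i \<in> {1..m}" for i t
  proof (cases "y (Suc t) = y t")
    case True then show ?thesis by simp
  next
    case False
    then have st: "trade_step pos_orthant u Du g0 m (\<delta> (stage t)) (y t) (y (Suc t))" using proc by blast
    have "\<forall>i\<in>{1..m}. y t i \<in> pos_orthant" using yX by blast
    from trade_basic(1)[OF ua this _ st] dpos i show ?thesis by blast
  qed
  have "\<forall>i\<in>{1..m}. \<exists>L. (\<lambda>t. u i (y t i)) \<longlonglongrightarrow> L"
  proof
    fix i assume i: "i \<in> {1..m}"
    have "incseq (\<lambda>t. u i (y t i))" using uinc[OF i] by (rule incseq_SucI)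
    moreover have "\<forall>t. u i (y t i) \<le> U" using U inv i by blast
    ultimately obtain L where "(\<lambda>t. u i (y t i)) \<longlonglongrightarrow> L" by (rule incseq_convergent)
    then show "\<exists>L. (\<lambda>t. u i (y t i)) \<longlonglongrightarrow> L" by blast
  qed
  from bchoice[OF this] obtain Ul where Ul: "\<forall>i\<in>{1..m}. (\<lambda>t. u i (y t i)) \<longlonglongrightarrow> Ul i" by blast
  have LP: "(\<forall>i\<in>{1..m}. w i \<in> K i \<and> u i (w i) = Ul i) \<and> (\<Sum>l\<in>{1..m}. w l) = T"
    if q: "\<And>n. n \<le> q n" and wl: "\<forall>i\<in>{1..m}. (\<lambda>n. y (q n) i) \<longlonglongrightarrow> w i" for q w
  proof -
    have fq: "filterlim q sequentially sequentially"
      by (rule filterlim_at_top_mono[OF filterlim_ident]) (use q in auto)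
    have wK: "w i \<in> K i" if i: "i \<in> {1..m}" for i
      by (rule closed_sequentially[OF compact_imp_closed[OF cK[OF i]], of "\<lambda>n. y (q n) i"]) (use inv i wl in auto)
    have uw: "u i (w i) = Ul i" if i: "i \<in> {1..m}" for i
    proof -
      have "isCont (u i) (w i)" using ua_deriv[of pos_orthant "u i" "Du i" "H i" "w i"] ua i wK[OF i] KX
        by (metis has_derivative_continuous subsetD)
      then have "(\<lambda>n. u i (y (q n) i)) \<longlonglongrightarrow> u i (w i)" using wl i by (metis isCont_tendsto_compose)
      moreover have "(\<lambda>n. u i (y (q n) i)) \<longlonglongrightarrow> Ul i"
        using filterlim_compose[OF Ul[rule_format, OF i] fq] by simp
      ultimately show ?thesis by (rule LIMSEQ_unique)
    qed
    have "(\<lambda>n. \<Sum>l\<in>{1..m}. y (q n) l) \<longlonglongrightarrow> (\<Sum>l\<in>{1..m}. w l)"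
      by (rule tendsto_sum) (use wl in auto)
    moreover have "(\<lambda>n. \<Sum>l\<in>{1..m}. y (q n) l) = (\<lambda>n. T)" using inv by auto
    ultimately have "(\<lambda>n. T) \<longlonglongrightarrow> (\<Sum>l\<in>{1..m}. w l)" by simp
    then have "(\<Sum>l\<in>{1..m}. w l) = T" using tendsto_const[of T sequentially] by (rule LIMSEQ_unique)
    then show ?thesis using wK uw by auto
  qed
  obtain r z where r: "strict_mono r" and z: "\<forall>i\<in>{1..m}. z i \<in> K i \<and> ((\<lambda>n. y (e (r n)) i) \<longlonglongrightarrow> z i)"
    using joint_subseq[of "{1..m}" K "\<lambda>n. y (e n)"] cK inv by auto
  have q1: "n \<le> e (r n)" for n using seq_suble[OF r, of n] ege[of "r n"] by linarith
  have zLP: "(\<forall>i\<in>{1..m}. z i \<in> K i \<and> u i (z i) = Ul i) \<and> (\<Sum>l\<in>{1..m}. z l) = T"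
    by (rule LP[of "\<lambda>n. e (r n)"]) (use q1 z in auto)
  have zX: "z i \<in> ?X" if "i \<in> {1..m}" for i using zLP KX that by blast
  have thr_le: "thr g0 (Du i2) (z i2) j \<le> thr g0 (Du i1) (z i1) j"
    if i: "i1 \<in> {1..m}" "i2 \<in> {1..m}" "j \<noteq> g0" for i1 i2 j
  proof -
    have ua1: "utility_assms pos_orthant (u i1) (Du i1) (H i1)" and ua2: "utility_assms pos_orthant (u i2) (Du i2) (H i2)"
      using ua i by auto
    have l1: "(\<lambda>n. thr g0 (Du i1) (y (e (r n)) i1) j) \<longlonglongrightarrow> thr g0 (Du i1) (z i1) j"
      by (rule thr_tendsto[OF ua1 zX[OF i(1)]]) (use z i in auto)
    have l2: "(\<lambda>n. thr g0 (Du i2) (y (e (r n)) i2) j) \<longlonglongrightarrow> thr g0 (Du i2) (z i2) j"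
      by (rule thr_tendsto[OF ua2 zX[OF i(2)]]) (use z i in auto)
    have d1: "(\<lambda>n. \<delta> (r n) i1 j) \<longlonglongrightarrow> 0" using LIMSEQ_subseq_LIMSEQ[OF dlim[rule_format, OF i(1) i(3)] r]
      by (simp add: o_def)
    have d2: "(\<lambda>n. \<delta> (r n) i2 j) \<longlonglongrightarrow> 0" using LIMSEQ_subseq_LIMSEQ[OF dlim[rule_format, OF i(2) i(3)] r]
      by (simp add: o_def)
    have "thr g0 (Du i2) (z i2) j - thr g0 (Du i1) (z i1) j \<le> 0 + 0"
    proof (rule LIMSEQ_le[OF tendsto_diff[OF l2 l1] tendsto_add[OF d1 d2]], intro exI allI impI)
      fix n
      let ?t = "e (r n)"
      have "0 < y ?t i1 $ j" using yX[OF i(1)] by (auto simp: pos_orthant_def)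
      then have "thr g0 (Du i2) (y ?t i2) j - \<delta> (stage ?t) i2 j < thr g0 (Du i1) (y ?t i1) j + \<delta> (stage ?t) i1 j"
        using noavail_thr[of pos_orthant u Du g0 m "\<delta> (stage ?t)" "y ?t" i1 i2 j] e(1) i unfolding bump_def by blast
      moreover have "\<delta> (stage ?t) i1 j \<le> \<delta> (r n) i1 j" "\<delta> (stage ?t) i2 j \<le> \<delta> (r n) i2 j"
        using dmono'[OF i(1) i(3) e(2)] dmono'[OF i(2) i(3) e(2)] by auto
      ultimately show "thr g0 (Du i2) (y ?t i2) j - thr g0 (Du i1) (y ?t i1) j \<le> \<delta> (r n) i1 j + \<delta> (r n) i2 j"
        by linarith
    qed
    then show ?thesis by simp
  qed
  define p where "p j = thr g0 (Du 1) (z 1) j" for j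
  have zp: "thr g0 (Du i) (z i) j = p j" if "i \<in> {1..m}" "j \<noteq> g0" for i j
  proof -
    have "1 \<in> {1..m}" using that by auto
    then have "thr g0 (Du i) (z i) j \<le> thr g0 (Du 1) (z 1) j" "thr g0 (Du 1) (z 1) j \<le> thr g0 (Du i) (z i) j"
      using thr_le[of 1 i j] thr_le[of i 1 j] that by auto
    then show ?thesis unfolding p_def by (rule antisym)
  qed
  have uniq: "\<forall>i\<in>{1..m}. w i = z i"
    if q: "\<And>n. n \<le> q n" and wl: "\<forall>i\<in>{1..m}. (\<lambda>n. y (q n) i) \<longlonglongrightarrow> w i" for q w
  proof -
    have wLP: "(\<forall>i\<in>{1..m}. w i \<in> K i \<and> u i (w i) = Ul i) \<and> (\<Sum>l\<in>{1..m}. w l) = T"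
      by (rule LP[OF q wl])
    show ?thesis
    proof (rule unique_alloc[of "{1..m}" u Du H z w g0 p])
      show "\<forall>i\<in>{1..m}. w i \<in> pos_orthant" using wLP KX by blast
    qed (use ua zX wLP zLP zp in \<open>auto\<close>)
  qed
  have conv: "(\<lambda>t. y t i) \<longlonglongrightarrow> z i" if i: "i \<in> {1..m}" for i
  proof (rule ccontr)
    assume "\<not> ?thesis"
    then obtain \<epsilon> where \<epsilon>: "\<epsilon> > 0" "\<forall>N. \<exists>n\<ge>N. \<epsilon> \<le> dist (y n i) (z i)"
      unfolding lim_sequentially by (auto simp: not_less)
    from choice[OF \<epsilon>(2)] obtain q where q0: "\<forall>N. N \<le> q N \<and> \<epsilon> \<le> dist (y (q N) i) (z i)" by blast
    then have q: "\<And>N. N \<le> q N" "\<And>N. \<epsilon> \<le> dist (y (q N) i) (z i)" by auto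
    obtain r2 w where r2: "strict_mono r2" and w: "\<forall>i\<in>{1..m}. w i \<in> K i \<and> ((\<lambda>n. y (q (r2 n)) i) \<longlonglongrightarrow> w i)"
      using joint_subseq[of "{1..m}" K "\<lambda>n. y (q n)"] cK inv by auto
    have "n \<le> q (r2 n)" for n using seq_suble[OF r2, of n] q(1)[of "r2 n"] by linarith
    then have "\<forall>i\<in>{1..m}. w i = z i" using uniq[of "\<lambda>n. q (r2 n)" w] w by auto
    then have "(\<lambda>n. y (q (r2 n)) i) \<longlonglongrightarrow> z i" using w i by auto
    then obtain N where "\<forall>n\<ge>N. dist (y (q (r2 n)) i) (z i) < \<epsilon>"
      using \<epsilon>(1) unfolding lim_sequentially by blast
    then have "dist (y (q (r2 N)) i) (z i) < \<epsilon>" by blast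
    then show False using q(2)[of "r2 N"] by linarith
  qed
  show ?thesis
  proof (intro exI[of _ z] exI[of _ p] conjI ballI allI impI)
    fix i j assume i: "i \<in> {1..m}"
    show "(\<lambda>t. y t i) \<longlonglongrightarrow> z i" by (rule conv[OF i])
    assume j: "j \<noteq> g0"
    have "(\<lambda>t. thr g0 (Du i) (y t i) j) \<longlonglongrightarrow> thr g0 (Du i) (z i) j"
      by (rule thr_tendsto[of "u i" "Du i" "H i"]) (use ua i zX conv in auto)
    then show "(\<lambda>t. thr g0 (Du i) (y t i) j) \<longlonglongrightarrow> p j" using zp[OF i j] by simp
    show "thr g0 (Du i) (z i) j = p j" by (rule zp[OF i j])
  next
    have "\<forall>i\<in>{1..m}. z i \<in> ?X \<and> (\<forall>x\<in>?X. x $ g0 + (\<Sum>j\<in>UNIV - {g0}. p j * x $ j)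
                 = z i $ g0 + (\<Sum>j\<in>UNIV - {g0}. p j * z i $ j) \<longrightarrow> u i x \<le> u i (z i))"
    proof
      fix i assume i: "i \<in> {1..m}"
      show "z i \<in> ?X \<and> (\<forall>x\<in>?X. x $ g0 + (\<Sum>j\<in>UNIV - {g0}. p j * x $ j)
                 = z i $ g0 + (\<Sum>j\<in>UNIV - {g0}. p j * z i $ j) \<longrightarrow> u i x \<le> u i (z i))"
        using zX[OF i] eq_opt[of "u i" "Du i" "H i" "z i" g0 p] ua i zp by auto
    qed
    then show "equilibrium pos_orthant u g0 m x0 z p"
      unfolding equilibrium_def using zLP T_def by auto
  qed
qed

theorem theorem3:
  fixes u :: "nat \<Rightarrow> real ^ 'g::finite \<Rightarrow> real"
    and Du :: "nat \<Rightarrow> real ^ 'g \<Rightarrow> real ^ 'g"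
    and H :: "nat \<Rightarrow> real ^ 'g \<Rightarrow> real ^ 'g ^ 'g"
    and g0 :: 'g and m :: nat
    and x0 :: "nat \<Rightarrow> real ^ 'g"
  assumes util: "\<forall>i\<in>{1..m}. utility_assms pos_orthant (u i) (Du i) (H i)"
    and init: "\<forall>i\<in>{1..m}. x0 i \<in> pos_orthant"
  shows
    "(\<forall>\<delta>. (\<forall>i\<in>{1..m}. \<forall>j. j \<noteq> g0 \<longrightarrow> 0 < \<delta> i j) \<longrightarrow>
        \<not> (\<exists>s. s 0 = x0 \<and> (\<forall>k. trade_step pos_orthant u Du g0 m \<delta> (s k) (s (Suc k))))) \<and>
     (\<forall>\<delta> y stage.
        (\<forall>k. \<forall>i\<in>{1..m}. \<forall>j. j \<noteq> g0 \<longrightarrow> 0 < \<delta> k i j) \<and>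
        (\<forall>k. \<forall>i\<in>{1..m}. \<forall>j. j \<noteq> g0 \<longrightarrow> \<delta> (Suc k) i j \<le> \<delta> k i j) \<and>
        (\<forall>i\<in>{1..m}. \<forall>j. j \<noteq> g0 \<longrightarrow> (\<lambda>k. \<delta> k i j) \<longlonglongrightarrow> 0) \<and>
        y 0 = x0 \<and> stage 0 = (0::nat) \<and>
        (\<forall>t. (trade_step pos_orthant u Du g0 m (\<delta> (stage t)) (y t) (y (Suc t))
                \<and> stage (Suc t) = stage t)
           \<or> (\<not> trade_available pos_orthant u Du g0 m (\<delta> (stage t)) (y t)
                \<and> y (Suc t) = y t \<and> stage (Suc t) = Suc (stage t)))
      \<longrightarrow> (\<exists>xbar pbar.
             (\<forall>i\<in>{1..m}. (\<lambda>t. y t i) \<longlonglongrightarrow> xbar i \<and>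
                (\<forall>j. j \<noteq> g0 \<longrightarrow>
                   (\<lambda>t. thr g0 (Du i) (y t i) j) \<longlonglongrightarrow> pbar j \<and>
                   thr g0 (Du i) (xbar i) j = pbar j)) \<and>
             equilibrium pos_orthant u g0 m x0 xbar pbar))"
proof (intro conjI allI impI)
  fix \<delta> :: "nat \<Rightarrow> 'g \<Rightarrow> real"
  assume dp: "\<forall>i\<in>{1..m}. \<forall>j. j \<noteq> g0 \<longrightarrow> 0 < \<delta> i j"
  show "\<not> (\<exists>s. s 0 = x0 \<and> (\<forall>k. trade_step pos_orthant u Du g0 m \<delta> (s k) (s (Suc k))))"
  proof
    assume "\<exists>s. s 0 = x0 \<and> (\<forall>k. trade_step pos_orthant u Du g0 m \<delta> (s k) (s (Suc k)))"
    then obtain s where s0: "s 0 = x0" and st: "\<forall>k. trade_step pos_orthant u Du g0 m \<delta> (s k) (s (Suc k))"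
      by blast
    show False
      by (rule partA[of m u Du H s g0 \<delta>]) (use util init s0 st dp in auto)
  qed
next
  fix \<delta> :: "nat \<Rightarrow> nat \<Rightarrow> 'g \<Rightarrow> real" and y :: "nat \<Rightarrow> nat \<Rightarrow> real^'g" and stage :: "nat \<Rightarrow> nat"
  assume h: "(\<forall>k. \<forall>i\<in>{1..m}. \<forall>j. j \<noteq> g0 \<longrightarrow> 0 < \<delta> k i j) \<and>
        (\<forall>k. \<forall>i\<in>{1..m}. \<forall>j. j \<noteq> g0 \<longrightarrow> \<delta> (Suc k) i j \<le> \<delta> k i j) \<and>
        (\<forall>i\<in>{1..m}. \<forall>j. j \<noteq> g0 \<longrightarrow> (\<lambda>k. \<delta> k i j) \<longlonglongrightarrow> 0) \<and>
        y 0 = x0 \<and> stage 0 = (0::nat) \<and>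
        (\<forall>t. (trade_step pos_orthant u Du g0 m (\<delta> (stage t)) (y t) (y (Suc t))
                \<and> stage (Suc t) = stage t)
           \<or> (\<not> trade_available pos_orthant u Du g0 m (\<delta> (stage t)) (y t)
                \<and> y (Suc t) = y t \<and> stage (Suc t) = Suc (stage t)))"
  then show "\<exists>xbar pbar.
             (\<forall>i\<in>{1..m}. (\<lambda>t. y t i) \<longlonglongrightarrow> xbar i \<and>
                (\<forall>j. j \<noteq> g0 \<longrightarrow>
                   (\<lambda>t. thr g0 (Du i) (y t i) j) \<longlonglongrightarrow> pbar j \<and>
                   thr g0 (Du i) (xbar i) j = pbar j)) \<and>
             equilibrium pos_orthant u g0 m x0 xbar pbar"
    apply (elim conjE)
    apply (rule partB[OF util init])
    by assumption+
qed

end
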